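(* In the source coding problem with receiver side information described in the context, suppose $U=Y$ and $V=X$ (i.e. $U_i=Y_i$ and $V_i=X_i$ for all $i$). Then the set $\mathcal{R}$ of achievable rate triples equals the closure of $\bigcup_{p\in\mathcal{P}^{**}}\mathcal{R}^{(p)**}$.
   Context: Let $\mathcal{X},\mathcal{Y},\mathcal{U},\mathcal{V}$ be finite sets and let $\{(X_i,Y_i,U_i,V_i)\}_{i\ge1}$ be i.i.d. with joint distribution $\mathcal{Q}_{XYUV}$, with $(X,Y)$-marginal $\mathcal{Q}_{XY}$. For $i=0,1,2$ let $\mathcal{M}_i=\{1,\dots,|\mathcal{M}_i|\}$ be finite index sets. A code of block length $n$ consists of an encoder $e^{(n)}:\mathcal{X}^n\times\mathcal{Y}^n\to\mathcal{M}_0\times\mathcal{M}_1\times\mathcal{M}_2$, $(M_0,M_1,M_2)=e^{(n)}(X^n,Y^n)$, a decoder $d_x^{(n)}:\mathcal{M}_0\times\mathcal{M}_1\times\mathcal{U}^n\to\mathcal{X}^n$, $\widehat X^n=d_x^{(n)}(M_0,M_1,U^n)$, and a decoder $d_y^{(n)}:\mathcal{M}_0\times\mathcal{M}_2\times\mathcal{V}^n\to\mathcal{Y}^n$, $\widehat Y^n=d_y^{(n)}(M_0,M_2,V^n)$. Let $P_e=\max\{\Pr[\widehat X^n\ne X^n],\Pr[\widehat Y^n\ne Y^n]\}$. A triple $(R_0,R_1,R_2)$ is achievable if for every $\epsilon>0$ and all sufficiently large $n$ there is such a code with $P_e\le\epsilon$ and $(1/n)\log_2|\mathcal{M}_i|\le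 R_i+\epsilon$, $i=0,1,2$; $\mathcal{R}$ is the set of achievable triples. Let $\mathcal{A},\mathcal{B}$ be finite sets with $|\mathcal{A}|\le|\mathcal{X}||\mathcal{Y}|+1$, $|\mathcal{B}|\le|\mathcal{X}||\mathcal{Y}|+1$. Let $\mathcal{P}^{**}$ be the set of probability functions $p$ on $\mathcal{A}\times\mathcal{B}\times\mathcal{X}\times\mathcal{Y}$ such that $\sum_{(a,b)\in\mathcal{A}\times\mathcal{B}}p(a,b,x,y)=\mathcal{Q}_{XY}(x,y)$ for all $(x,y)$. For $p\in\mathcal{P}^{**}$ let $\mathcal{R}^{(p)**}$ be the set of $(R_0,R_1,R_2)$ with $R_0\ge\max\{H_p(X|A,Y),H_p(Y|B,X)\}$, $R_1\ge I_p(X;A|Y)$, $R_2\ge I_p(Y;B|X)$. *)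

theory Defs
  imports "HOL-Analysis.Analysis" "HOL-Probability.Probability_Mass_Function"
begin

definition blockprob :: "('x \<times> 'y) pmf \<Rightarrow> 'x list \<Rightarrow> 'y list \<Rightarrow> real" where
  "blockprob Q xs ys = (\<Prod>i<length xs. pmf Q (xs ! i, ys ! i))"

definition blocks :: "nat \<Rightarrow> ('x list \<times> 'y list) set" where
  "blocks n = {(xs, ys). length xs = n \<and> length ys = n}"

text \<open>Pr[Xhat \<noteq> X]: decoder x sees (M0, M1, U^n) with U^n = Y^n.\<close>
definition err_x ::
  "('x \<times> 'y) pmf \<Rightarrow> nat \<Rightarrow> ('x list \<Rightarrow> 'y list \<Rightarrow> nat \<times> nat \<times> nat)
     \<Rightarrow> (nat \<Rightarrow> nat \<Rightarrow> 'y list \<Rightarrow> 'x list) \<Rightarrow> real" where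
  "err_x Q n e dx = (\<Sum>(xs, ys)\<in>blocks n.
      (case e xs ys of (m0, m1, m2) \<Rightarrow> if dx m0 m1 ys \<noteq> xs then blockprob Q xs ys else 0))"

text \<open>Pr[Yhat \<noteq> Y]: decoder y sees (M0, M2, V^n) with V^n = X^n.\<close>
definition err_y ::
  "('x \<times> 'y) pmf \<Rightarrow> nat \<Rightarrow> ('x list \<Rightarrow> 'y list \<Rightarrow> nat \<times> nat \<times> nat)
     \<Rightarrow> (nat \<Rightarrow> nat \<Rightarrow> 'x list \<Rightarrow> 'y list) \<Rightarrow> real" where
  "err_y Q n e dy = (\<Sum>(xs, ys)\<in>blocks n.
      (case e xs ys of (m0, m1, m2) \<Rightarrow> if dy m0 m2 xs \<noteq> ys then blockprob Q xs ys else 0))"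

definition achievable :: "('x \<times> 'y) pmf \<Rightarrow> real \<times> real \<times> real \<Rightarrow> bool" where
  "achievable Q R \<longleftrightarrow> (case R of (R0, R1, R2) \<Rightarrow>
     (\<forall>\<epsilon>>0. \<exists>N. \<forall>n\<ge>N. \<exists>(m0::nat) (m1::nat) (m2::nat)
        (e :: 'x list \<Rightarrow> 'y list \<Rightarrow> nat \<times> nat \<times> nat)
        (dx :: nat \<Rightarrow> nat \<Rightarrow> 'y list \<Rightarrow> 'x list)
        (dy :: nat \<Rightarrow> nat \<Rightarrow> 'x list \<Rightarrow> 'y list).
          0 < m0 \<and> 0 < m1 \<and> 0 < m2 \<and>
          (\<forall>(xs, ys)\<in>blocks n. e xs ys \<in> {1..m0} \<times> {1..m1} \<times> {1..m2}) \<and>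
          max (err_x Q n e dx) (err_y Q n e dy) \<le> \<epsilon> \<and>
          log 2 (real m0) / real n \<le> R0 + \<epsilon> \<and>
          log 2 (real m1) / real n \<le> R1 + \<epsilon> \<and>
          log 2 (real m2) / real n \<le> R2 + \<epsilon>))"

definition achievable_region :: "('x \<times> 'y) pmf \<Rightarrow> (real \<times> real \<times> real) set" where
  "achievable_region Q = {R. achievable Q R}"

definition marg :: "'w set \<Rightarrow> ('w \<Rightarrow> real) \<Rightarrow> ('w \<Rightarrow> 'v) \<Rightarrow> 'v \<Rightarrow> real" where
  "marg \<Omega> p h v = (\<Sum>\<omega>\<in>{\<omega>\<in>\<Omega>. h \<omega> = v}. p \<omega>)"

text \<open>Conditional entropy H(F|G) in bits (terms with p = 0 contribute 0).\<close>
definition cond_ent :: "'w set \<Rightarrow> ('w \<Rightarrow> real) \<Rightarrow> ('w \<Rightarrow> 'f) \<Rightarrow> ('w \<Rightarrow> 'g) \<Rightarrow> real" where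
  "cond_ent \<Omega> p F G = - (\<Sum>\<omega>\<in>\<Omega>. p \<omega> *
      log 2 (marg \<Omega> p (\<lambda>w. (F w, G w)) (F \<omega>, G \<omega>) / marg \<Omega> p G (G \<omega>)))"

definition cond_mi :: "'w set \<Rightarrow> ('w \<Rightarrow> real) \<Rightarrow> ('w \<Rightarrow> 'f) \<Rightarrow> ('w \<Rightarrow> 'h) \<Rightarrow> ('w \<Rightarrow> 'g) \<Rightarrow> real" where
  "cond_mi \<Omega> p F H G = cond_ent \<Omega> p F G - cond_ent \<Omega> p F (\<lambda>w. (H w, G w))"

text \<open>Auxiliary alphabets A, B are represented as {..<K} with K = |X||Y| + 1;
  every finite A, B with |A|, |B| \<le> K embeds into this.\<close>
definition aux_card :: "'x itself \<Rightarrow> 'y itself \<Rightarrow> nat" where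
  "aux_card _ _ = CARD('x) * CARD('y) + 1"

definition Omega :: "'x itself \<Rightarrow> 'y itself \<Rightarrow> (nat \<times> nat \<times> 'x \<times> 'y) set" where
  "Omega tx ty = {..<aux_card tx ty} \<times> {..<aux_card tx ty} \<times> UNIV \<times> UNIV"

definition Pss :: "('x::finite \<times> 'y::finite) pmf \<Rightarrow> (nat \<times> nat \<times> 'x \<times> 'y \<Rightarrow> real) set" where
  "Pss Q = {p. (\<forall>\<omega>. \<omega> \<notin> Omega TYPE('x) TYPE('y) \<longrightarrow> p \<omega> = 0) \<and>
               (\<forall>\<omega>\<in>Omega TYPE('x) TYPE('y). 0 \<le> p \<omega>) \<and>
               (\<forall>x y. (\<Sum>(a, b)\<in>{..<aux_card TYPE('x) TYPE('y)} \<times> {..<aux_card TYPE('x) TYPE('y)}.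
                          p (a, b, x, y)) = pmf Q (x, y))}"

definition Rss :: "(nat \<times> nat \<times> 'x::finite \<times> 'y::finite \<Rightarrow> real) \<Rightarrow> (real \<times> real \<times> real) set" where
  "Rss p = (let \<Omega> = Omega TYPE('x) TYPE('y);
                A = (\<lambda>(a, b, x, y). a); B = (\<lambda>(a, b, x, y). b);
                X = (\<lambda>(a::nat, b::nat, x::'x, y::'y). x); Y = (\<lambda>(a, b, x, y). y) in
     {(R0, R1, R2).
        R0 \<ge> max (cond_ent \<Omega> p X (\<lambda>w. (A w, Y w))) (cond_ent \<Omega> p Y (\<lambda>w. (B w, X w))) \<and>
        R1 \<ge> cond_mi \<Omega> p X A Y \<and>
        R2 \<ge> cond_mi \<Omega> p Y B X})"

end

theory Submission
  imports Defs
begin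


definition bp :: "('a \<Rightarrow> 'b \<Rightarrow> real) \<Rightarrow> 'a list \<Rightarrow> 'b list \<Rightarrow> real" where
  "bp q xs ys = prod_list (map (case_prod q) (zip xs ys))"
definition sl :: "('a \<Rightarrow> 'b \<Rightarrow> real) \<Rightarrow> 'a list \<Rightarrow> 'b list \<Rightarrow> real" where
  "sl f xs ys = sum_list (map (case_prod f) (zip xs ys))"

lemma bp_Cons[simp]: "bp q (x#xs) (y#ys) = q x y * bp q xs ys" by (simp add: bp_def)
lemma sl_Cons[simp]: "sl q (x#xs) (y#ys) = q x y + sl q xs ys" by (simp add: sl_def)
lemma bp_Nil[simp]: "bp q [] [] = 1" by (simp add: bp_def)
lemma sl_Nil[simp]: "sl q [] [] = 0" by (simp add: sl_def)

lemma blocks_0: "blocks 0 = {([],[])}" by (auto simp: blocks_def)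

lemma blocks_Suc: "blocks (Suc n) = (\<lambda>((x,y),(xs,ys)). (x#xs, y#ys)) ` (UNIV \<times> blocks n)"
proof -
  have "(xs, ys) \<in> (\<lambda>((x,y),(xs,ys)). (x#xs, y#ys)) ` (UNIV \<times> blocks n)"
    if L: "length xs = Suc n" "length ys = Suc n" for xs :: "'a list" and ys :: "'b list"
  proof -
    obtain x xs' where x: "xs = x#xs'" using L by (cases xs) auto
    obtain y ys' where y: "ys = y#ys'" using L by (cases ys) auto
    show ?thesis using L x y by (auto simp: blocks_def image_iff intro!: bexI[of _ "((x,y),(xs',ys'))"])
  qed
  then show ?thesis by (auto simp: blocks_def)
qed

lemma finite_blocks[simp]: "finite (blocks n :: ('a::finite list \<times> 'b::finite list) set)"
proof -
  have "blocks n = {xs::'a list. length xs = n} \<times> {ys::'b list. length ys = n}" by (auto simp: blocks_def)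
  then show ?thesis using finite_lists_length_eq[of "UNIV::'a set"] finite_lists_length_eq[of "UNIV::'b set"] by simp
qed

lemma sum_blocks_Suc:
  "(\<Sum>(xs,ys)\<in>blocks (Suc n). F xs ys) =
   (\<Sum>(x,y)\<in>(UNIV::('a::finite \<times> 'b::finite) set). \<Sum>(xs,ys)\<in>blocks n. F (x#xs) (y#ys))"
proof -
  have inj: "inj_on (\<lambda>((x,y),(xs,ys)). (x#xs, y#ys)) (UNIV \<times> (blocks n :: ('a list \<times> 'b list) set))"
    by (auto simp: inj_on_def)
  have "(\<Sum>(xs,ys)\<in>blocks (Suc n). F xs ys) = (\<Sum>z\<in>UNIV \<times> blocks n. (case z of ((x,y),(xs,ys)) \<Rightarrow> F (x#xs) (y#ys)))"
    unfolding blocks_Suc by (subst sum.reindex[OF inj]) (auto intro!: sum.cong)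
  also have "\<dots> = (\<Sum>(x,y)\<in>(UNIV::('a \<times> 'b) set). \<Sum>(xs,ys)\<in>blocks n. F (x#xs) (y#ys))"
    by (subst sum.cartesian_product[symmetric]) (auto intro!: sum.cong)
  finally show ?thesis .
qed

lemma sum_bp:
  fixes q :: "'a::finite \<Rightarrow> 'b::finite \<Rightarrow> real"
  assumes "(\<Sum>(x,y)\<in>UNIV. q x y) = 1"
  shows "(\<Sum>(xs,ys)\<in>blocks n. bp q xs ys) = 1"
proof (induction n)
  case 0 then show ?case by (simp add: blocks_0)
next
  case (Suc n)
  have "(\<Sum>(xs,ys)\<in>blocks (Suc n). bp q xs ys) = (\<Sum>(x,y)\<in>(UNIV::('a \<times> 'b) set). q x y * (\<Sum>(xs,ys)\<in>blocks n. bp q xs ys))"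
    unfolding sum_blocks_Suc by (simp add: sum_distrib_left case_prod_unfold)
  also have "\<dots> = 1" using Suc assms by simp
  finally show ?case .
qed

lemma bp_nonneg: "(\<And>x y. 0 \<le> q x y) \<Longrightarrow> length xs = length ys \<Longrightarrow> 0 \<le> bp q xs ys"
proof (induction xs arbitrary: ys)
  case Nil then show ?case by simp
next
  case (Cons a xs) then show ?case by (cases ys) auto
qed

lemma sum_bp_sl:
  fixes q :: "'a::finite \<Rightarrow> 'b::finite \<Rightarrow> real"
  assumes "(\<Sum>(x,y)\<in>UNIV. q x y) = 1" "(\<Sum>(x,y)\<in>UNIV. q x y * f x y) = 0"
  shows "(\<Sum>(xs,ys)\<in>blocks n. bp q xs ys * sl f xs ys) = 0"
proof (induction n)
  case 0 then show ?case by (simp add: blocks_0)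
next
  case (Suc n)
  have "(\<Sum>(xs,ys)\<in>blocks (Suc n). bp q xs ys * sl f xs ys) =
    (\<Sum>(x,y)\<in>(UNIV::('a \<times> 'b) set). q x y * f x y * (\<Sum>(xs,ys)\<in>blocks n. bp q xs ys)
       + q x y * (\<Sum>(xs,ys)\<in>blocks n. bp q xs ys * sl f xs ys))"
    unfolding sum_blocks_Suc by (simp add: sum_distrib_left case_prod_unfold algebra_simps sum.distrib)
  also have "\<dots> = 0" using Suc assms sum_bp[OF assms(1)] by (simp add: case_prod_unfold)
  finally show ?case .
qed

lemma sum_bp_sl2:
  fixes q :: "'a::finite \<Rightarrow> 'b::finite \<Rightarrow> real"
  assumes "(\<Sum>(x,y)\<in>UNIV. q x y) = 1" "(\<Sum>(x,y)\<in>UNIV. q x y * f x y) = 0"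
  shows "(\<Sum>(xs,ys)\<in>blocks n. bp q xs ys * (sl f xs ys)^2) = real n * (\<Sum>(x,y)\<in>UNIV. q x y * (f x y)^2)"
proof (induction n)
  case 0 then show ?case by (simp add: blocks_0)
next
  case (Suc n)
  have "(\<Sum>(xs,ys)\<in>blocks (Suc n). bp q xs ys * (sl f xs ys)^2) =
    (\<Sum>(x,y)\<in>(UNIV::('a \<times> 'b) set). q x y * (f x y)^2 * (\<Sum>(xs,ys)\<in>blocks n. bp q xs ys)
       + 2 * (q x y * f x y) * (\<Sum>(xs,ys)\<in>blocks n. bp q xs ys * sl f xs ys)
       + q x y * (\<Sum>(xs,ys)\<in>blocks n. bp q xs ys * (sl f xs ys)^2))"
    unfolding sum_blocks_Suc by (simp add: sum_distrib_left case_prod_unfold algebra_simps sum.distrib power2_eq_square)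
  also have "\<dots> = (\<Sum>(x,y)\<in>(UNIV::('a \<times> 'b) set). q x y * (f x y)^2) + real n * (\<Sum>(x,y)\<in>UNIV. q x y * (f x y)^2)"
    using Suc assms sum_bp[OF assms(1)] sum_bp_sl[OF assms]
    by (simp add: case_prod_unfold sum.distrib sum_distrib_right[symmetric])
  finally show ?case by (simp add: algebra_simps)
qed

lemma chebyshev_blocks:
  fixes q :: "'a::finite \<Rightarrow> 'b::finite \<Rightarrow> real"
  assumes "(\<Sum>(x,y)\<in>UNIV. q x y) = 1" "(\<Sum>(x,y)\<in>UNIV. q x y * f x y) = 0"
    and nn: "\<And>x y. 0 \<le> q x y" and t: "t > 0"
  shows "(\<Sum>(xs,ys)\<in>blocks n. bp q xs ys * (if t \<le> \<bar>sl f xs ys\<bar> then 1 else 0))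
     \<le> real n * (\<Sum>(x,y)\<in>UNIV. q x y * (f x y)^2) / t^2"
proof -
  have "(\<Sum>(xs,ys)\<in>blocks n. bp q xs ys * (if t \<le> \<bar>sl f xs ys\<bar> then 1 else 0))
     \<le> (\<Sum>(xs,ys)\<in>blocks n. bp q xs ys * ((sl f xs ys)^2 / t^2))"
  proof (rule sum_mono, clarify)
    fix xs ys assume "(xs, ys) \<in> (blocks n :: ('a list \<times> 'b list) set)"
    then have b: "0 \<le> bp q xs ys" using bp_nonneg[of q xs ys] nn by (auto simp: blocks_def)
    have "(if t \<le> \<bar>sl f xs ys\<bar> then 1 else 0) \<le> (sl f xs ys)^2 / t^2"
    proof (cases "t \<le> \<bar>sl f xs ys\<bar>")
      case True
      then have "t^2 \<le> (sl f xs ys)^2" using t by (metis abs_le_square_iff abs_of_pos)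
      then show ?thesis using True t by simp
    qed auto
    then show "bp q xs ys * (if t \<le> \<bar>sl f xs ys\<bar> then 1 else 0) \<le> bp q xs ys * ((sl f xs ys)^2 / t^2)"
      using b by (rule mult_left_mono)
  qed
  also have "\<dots> = (\<Sum>(xs,ys)\<in>blocks n. bp q xs ys * (sl f xs ys)^2) / t^2"
    by (simp add: sum_divide_distrib case_prod_unfold)
  also have "\<dots> = real n * (\<Sum>(x,y)\<in>UNIV. q x y * (f x y)^2) / t^2"
    using sum_bp_sl2[OF assms(1,2)] by simp
  finally show ?thesis .
qed



definition qY :: "('a::finite \<Rightarrow> 'b \<Rightarrow> real) \<Rightarrow> 'b \<Rightarrow> real" where
  "qY q y = (\<Sum>x\<in>UNIV. q x y)"
definition Hc :: "('a::finite \<Rightarrow> 'b::finite \<Rightarrow> real) \<Rightarrow> real" where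
  "Hc q = - (\<Sum>(x,y)\<in>UNIV. q x y * log 2 (q x y / qY q y))"
definition gd :: "('a::finite \<Rightarrow> 'b::finite \<Rightarrow> real) \<Rightarrow> 'a \<Rightarrow> 'b \<Rightarrow> real" where
  "gd q x y = - log 2 (q x y / qY q y) - Hc q"

lemma lists_Suc_sum:
  "(\<Sum>xs\<in>{xs. length xs = Suc n}. F xs) = (\<Sum>x\<in>(UNIV::'a::finite set). \<Sum>xs\<in>{xs. length xs = n}. F (x#xs))"
proof -
  have eq: "{xs::'a list. length xs = Suc n} = (\<lambda>(x,xs). x#xs) ` (UNIV \<times> {xs. length xs = n})"
  proof -
    have "xs \<in> (\<lambda>(x,xs). x#xs) ` (UNIV \<times> {xs. length xs = n})" if L: "length xs = Suc n" for xs :: "'a list"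
    proof -
      obtain x xs' where x: "xs = x#xs'" using L by (cases xs) auto
      show ?thesis using L x by (auto simp: image_iff)
    qed
    then show ?thesis by auto
  qed
  have inj: "inj_on (\<lambda>(x,xs). x#xs) (UNIV \<times> {xs::'a list. length xs = n})" by (auto simp: inj_on_def)
  show ?thesis unfolding eq
    by (simp add: sum.reindex[OF inj] sum.cartesian_product')
qed

lemma finite_lists_n[simp]: "finite {xs::'a::finite list. length xs = n}"
  using finite_lists_length_eq[of "UNIV::'a set"] by simp

lemma sum_bp_x:
  fixes q :: "'a::finite \<Rightarrow> 'b::finite \<Rightarrow> real"
  shows "length ys = n \<Longrightarrow> (\<Sum>xs\<in>{xs. length xs = n}. bp q xs ys) = prod_list (map (qY q) ys)"
proof (induction ys arbitrary: n)
  case Nil then show ?case by simp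
next
  case (Cons y ys)
  then obtain m where m: "n = Suc m" "length ys = m" by auto
  show ?case unfolding m(1) lists_Suc_sum
    using Cons.IH[OF m(2)] by (simp add: sum_distrib_left[symmetric] sum_distrib_right[symmetric] qY_def)
qed

lemma qY_ge: "(\<And>x y. 0 \<le> q x y) \<Longrightarrow> q x y \<le> qY q y"
  unfolding qY_def by (rule member_le_sum) auto

lemma q_density:
  assumes nn: "\<And>x y. 0 \<le> q x y" and pos: "0 < q x y"
  shows "q x y = qY q y * 2 powr (-(gd q x y + Hc q))"
proof -
  have "q x y \<le> qY q y" by (rule qY_ge) (rule nn)
  then have qy: "0 < qY q y" using pos by linarith
  have "2 powr (-(gd q x y + Hc q)) = 2 powr (log 2 (q x y / qY q y))" by (simp add: gd_def)
  also have "\<dots> = q x y / qY q y" using pos qy by simp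
  finally show ?thesis using qy by simp
qed

lemma bp_density:
  fixes q :: "'a::finite \<Rightarrow> 'b::finite \<Rightarrow> real"
  assumes nn: "\<And>x y. 0 \<le> q x y"
  shows "length xs = length ys \<Longrightarrow> 0 < bp q xs ys \<Longrightarrow>
    bp q xs ys = prod_list (map (qY q) ys) * 2 powr (-(sl (gd q) xs ys + real (length xs) * Hc q))"
proof (induction xs arbitrary: ys)
  case Nil then show ?case by simp
next
  case (Cons x xs)
  then obtain y ys' where y: "ys = y#ys'" "length xs = length ys'" by (cases ys) auto
  have b0: "0 \<le> bp q xs ys'" using bp_nonneg[of q xs ys'] nn y by auto
  have pos: "0 < q x y * bp q xs ys'" using Cons.prems y by simp
  have qpos: "0 < q x y" and bpos: "0 < bp q xs ys'"
    using pos nn[of x y] b0 by (auto simp: zero_less_mult_iff)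
  have "bp q (x#xs) ys = q x y * bp q xs ys'" using y by simp
  also have "\<dots> = (qY q y * 2 powr (-(gd q x y + Hc q))) *
      (prod_list (map (qY q) ys') * 2 powr (-(sl (gd q) xs ys' + real (length xs) * Hc q)))"
    using q_density[of q, OF nn qpos] Cons.IH[OF y(2) bpos] by simp
  also have "\<dots> = prod_list (map (qY q) ys) * 2 powr (-(sl (gd q) (x#xs) ys + real (length (x#xs)) * Hc q))"
    using y by (simp add: powr_add[symmetric] algebra_simps)
  finally show ?case .
qed

lemma prod_qY_pos:
  fixes q :: "'a::finite \<Rightarrow> 'b::finite \<Rightarrow> real"
  assumes nn: "\<And>x y. 0 \<le> q x y" and L: "length xs = length ys" and p: "0 < bp q xs ys"
  shows "0 < prod_list (map (qY q) ys)"
  using bp_density[OF nn L p] p by (simp add: zero_less_mult_iff)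

lemma sum_q_gd:
  fixes q :: "'a::finite \<Rightarrow> 'b::finite \<Rightarrow> real"
  assumes "(\<Sum>(x,y)\<in>UNIV. q x y) = 1"
  shows "(\<Sum>(x,y)\<in>UNIV. q x y * gd q x y) = 0"
proof -
  have "(\<Sum>(x,y)\<in>UNIV. q x y * gd q x y) = (\<Sum>(x,y)\<in>UNIV. - (q x y * log 2 (q x y / qY q y))) - (\<Sum>(x,y)\<in>UNIV. q x y) * Hc q"
    by (simp add: gd_def sum_subtractf sum_distrib_right sum_distrib_left algebra_simps case_prod_unfold)
  also have "\<dots> = 0" using assms by (simp add: Hc_def sum_negf case_prod_unfold sum_distrib_left)
  finally show ?thesis .
qed



lemma sum_indicator_card: "finite C \<Longrightarrow> (\<Sum>c\<in>C. if P c then (1::real) else 0) = real (card {c\<in>C. P c})"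
  by (simp add: sum.If_cases Int_def)

lemma coloring_card:
  fixes D :: "'a set" and K :: nat
  assumes D: "finite D" and a: "a \<in> D" and b: "b \<in> D" and ab: "a \<noteq> b"
  shows "card {c \<in> PiE D (\<lambda>_. {..<K}). c a = c b} * K = card (PiE D (\<lambda>_. {..<K}))"
proof -
  let ?S = "{c \<in> PiE D (\<lambda>_. {..<K}). c a = c b}"
  let ?r = "\<lambda>c. restrict c (D - {b})"
  have inj: "inj_on ?r ?S"
  proof (rule inj_onI)
    fix c1 c2 assume c1: "c1 \<in> ?S" and c2: "c2 \<in> ?S" and eq: "?r c1 = ?r c2"
    have ag: "c1 x = c2 x" if "x \<in> D - {b}" for x
      using fun_cong[OF eq, of x] that by simp
    have c1a: "c1 a = c1 b" and c2a: "c2 a = c2 b" using c1 c2 by simp_all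
    have e1: "c1 \<in> extensional D" and e2: "c2 \<in> extensional D" using c1 c2 by (simp_all add: PiE_iff)
    show "c1 = c2"
    proof
      fix x show "c1 x = c2 x"
      proof (cases "x \<in> D")
        case True
        show ?thesis
        proof (cases "x = b")
          case True
          have "c1 a = c2 a" using ag[of a] a ab by simp
          then show ?thesis using True c1a c2a by simp
        next
          case False then show ?thesis using ag \<open>x \<in> D\<close> by simp
        qed
      next
        case False then show ?thesis using e1 e2 by (simp add: extensional_def)
      qed
    qed
  qed
  have img: "?r ` ?S = PiE (D - {b}) (\<lambda>_. {..<K})"
  proof
    show "?r ` ?S \<subseteq> PiE (D - {b}) (\<lambda>_. {..<K})"
    proof (rule image_subsetI)
      fix c assume "c \<in> ?S"
      then have "c \<in> PiE D (\<lambda>_. {..<K})" by blast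
      then show "?r c \<in> PiE (D - {b}) (\<lambda>_. {..<K})" unfolding restrict_PiE_iff by (blast dest: PiE_mem)
    qed
  next
    show "PiE (D - {b}) (\<lambda>_. {..<K}) \<subseteq> ?r ` ?S"
    proof
      fix d assume d: "d \<in> PiE (D - {b}) (\<lambda>_. {..<K})"
      let ?c = "d(b := d a)"
      have dD: "\<And>x. x \<in> D - {b} \<Longrightarrow> d x < K" and dU: "\<And>x. x \<notin> D - {b} \<Longrightarrow> d x = undefined"
        using d by (blast dest: PiE_mem, meson PiE_E)
      have "?c \<in> PiE D (\<lambda>_. {..<K})"
        unfolding PiE_iff extensional_def mem_Collect_eq
      proof (intro conjI ballI allI impI)
        fix x assume xD: "x \<in> D"
        show "?c x \<in> {..<K}"
        proof (cases "x = b")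
          case True then show ?thesis using dD[of a] a ab by simp
        next
          case False then show ?thesis using dD[of x] xD by simp
        qed
      next
        fix x assume "x \<notin> D" then show "?c x = undefined" using dU[of x] b by (cases "x = b") simp_all
      qed
      moreover have "?c a = ?c b" using ab by simp
      ultimately have cS: "?c \<in> ?S" by blast
      have rc: "?r ?c = d"
      proof
        fix x show "?r ?c x = d x" using dU[of x] by (cases "x \<in> D - {b}") auto
      qed
      show "d \<in> ?r ` ?S" by (rule image_eqI[of d ?r ?c, OF rc[symmetric] cS])
    qed
  qed
  have "card ?S = card (?r ` ?S)" by (rule card_image[OF inj, symmetric])
  also have "\<dots> = card (PiE (D - {b}) (\<lambda>_. {..<K}))" by (simp only: img)
  also have "\<dots> = K ^ (card D - 1)" using D b by (simp add: card_PiE)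
  finally have cS: "card ?S = K ^ (card D - 1)" .
  have "card D \<noteq> 0" using D b by auto
  then have "K ^ (card D - 1) * K = K ^ card D" by (cases "card D") auto
  then show ?thesis using cS D by (simp add: card_PiE)
qed

lemma exists_le_avg:
  fixes f :: "'c \<Rightarrow> real"
  assumes "finite C" "C \<noteq> {}" "(\<Sum>c\<in>C. f c) \<le> real (card C) * B"
  shows "\<exists>c\<in>C. f c \<le> B"
proof (rule ccontr)
  assume "\<not> ?thesis"
  then have "\<forall>c\<in>C. B < f c" by auto
  then have "(\<Sum>c\<in>C. B) < (\<Sum>c\<in>C. f c)" using assms(1,2) by (intro sum_strict_mono) auto
  then show False using assms(3) by simp
qed

definition typS :: "('a::finite \<Rightarrow> 'b::finite \<Rightarrow> real) \<Rightarrow> nat \<Rightarrow> real \<Rightarrow> 'b list \<Rightarrow> 'a list set" where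
  "typS q n T ys = {xs. length xs = n \<and> T * prod_list (map (qY q) ys) \<le> bp q xs ys}"

lemma card_typS:
  fixes q :: "'a::finite \<Rightarrow> 'b::finite \<Rightarrow> real"
  assumes nn: "\<And>x y. 0 \<le> q x y" and T: "T > 0" and L: "length ys = n"
    and P: "0 < prod_list (map (qY q) ys)"
  shows "real (card (typS q n T ys)) \<le> 1 / T"
proof -
  let ?P = "prod_list (map (qY q) ys)"
  have fin: "finite (typS q n T ys)" unfolding typS_def by (rule finite_subset[OF _ finite_lists_n[of n]]) auto
  have "real (card (typS q n T ys)) * (T * ?P) = (\<Sum>xs\<in>typS q n T ys. T * ?P)" by simp
  also have "\<dots> \<le> (\<Sum>xs\<in>typS q n T ys. bp q xs ys)" by (rule sum_mono) (auto simp: typS_def)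
  also have "\<dots> \<le> (\<Sum>xs\<in>{xs. length xs = n}. bp q xs ys)"
    by (rule sum_mono2) (use bp_nonneg[of q] nn L in \<open>auto simp: typS_def\<close>)
  also have "\<dots> = ?P" using sum_bp_x[of ys n q, OF L] by simp
  finally have "real (card (typS q n T ys)) * T * ?P \<le> 1 * ?P" by (simp add: mult.assoc)
  then have "real (card (typS q n T ys)) * T \<le> 1" using P by (meson mult_le_cancel_right_pos)
  then show ?thesis using T by (simp add: field_simps)
qed

lemma not_typS_dev:
  fixes q :: "'a::finite \<Rightarrow> 'b::finite \<Rightarrow> real"
  assumes nn: "\<And>x y. 0 \<le> q x y" and L: "length xs = n" "length ys = n"
    and pos: "0 < bp q xs ys" and nS: "xs \<notin> typS q n (2 powr (-(real n * (Hc q + \<delta>)))) ys"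
  shows "real n * \<delta> \<le> \<bar>sl (gd q) xs ys\<bar>"
proof -
  let ?P = "prod_list (map (qY q) ys)"
  have P: "0 < ?P" using prod_qY_pos[OF nn _ pos] L by simp
  have "bp q xs ys < 2 powr (-(real n * (Hc q + \<delta>))) * ?P" using nS L by (auto simp: typS_def)
  then have "?P * 2 powr (-(sl (gd q) xs ys + real n * Hc q)) < ?P * 2 powr (-(real n * (Hc q + \<delta>)))"
    using bp_density[OF nn _ pos] L by (simp add: mult.commute)
  then have "2 powr (-(sl (gd q) xs ys + real n * Hc q)) < 2 powr (-(real n * (Hc q + \<delta>)))"
    using P by simp
  then have "-(sl (gd q) xs ys + real n * Hc q) < -(real n * (Hc q + \<delta>))" by simp
  then show ?thesis by (simp add: algebra_simps)
qed

lemma in_typS'_dev: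
  fixes q :: "'a::finite \<Rightarrow> 'b::finite \<Rightarrow> real"
  assumes nn: "\<And>x y. 0 \<le> q x y" and L: "length xs = n" "length ys = n"
    and pos: "0 < bp q xs ys" and S: "2 powr (-(real n * (Hc q - \<delta>))) * prod_list (map (qY q) ys) < bp q xs ys"
  shows "real n * \<delta> \<le> \<bar>sl (gd q) xs ys\<bar>"
proof -
  let ?P = "prod_list (map (qY q) ys)"
  have P: "0 < ?P" using prod_qY_pos[OF nn _ pos] L by simp
  have "?P * 2 powr (-(real n * (Hc q - \<delta>))) < ?P * 2 powr (-(sl (gd q) xs ys + real n * Hc q))"
    using bp_density[OF nn _ pos] L S by (simp add: mult.commute)
  then have "2 powr (-(real n * (Hc q - \<delta>))) < 2 powr (-(sl (gd q) xs ys + real n * Hc q))"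
    using P by simp
  then have "-(real n * (Hc q - \<delta>)) < -(sl (gd q) xs ys + real n * Hc q)" by simp
  then show ?thesis by (simp add: algebra_simps)
qed



definition Vq :: "('a::finite \<Rightarrow> 'b::finite \<Rightarrow> real) \<Rightarrow> real" where
  "Vq q = (\<Sum>(x,y)\<in>UNIV. q x y * (gd q x y)^2)"

lemma typS_sub: "typS q n T ys \<subseteq> {xs. length xs = n}" by (auto simp: typS_def)
lemma finite_typS[simp]: "finite (typS (q::'a::finite \<Rightarrow> 'b::finite \<Rightarrow> real) n T ys)"
  by (rule finite_subset[OF typS_sub]) simp

lemma dev_prob:
  fixes q :: "'a::finite \<Rightarrow> 'b::finite \<Rightarrow> real"
  assumes nn: "\<And>x y. 0 \<le> q x y" and s1: "(\<Sum>(x,y)\<in>UNIV. q x y) = 1" and t: "0 < real n * \<delta>"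
  shows "(\<Sum>(xs,ys)\<in>blocks n. bp q xs ys * (if xs \<notin> typS q n (2 powr (-(real n * (Hc q + \<delta>)))) ys then 1 else 0))
     \<le> real n * Vq q / (real n * \<delta>)^2"
proof -
  have "(\<Sum>(xs,ys)\<in>blocks n. bp q xs ys * (if xs \<notin> typS q n (2 powr (-(real n * (Hc q + \<delta>)))) ys then 1 else 0))
     \<le> (\<Sum>(xs,ys)\<in>blocks n. bp q xs ys * (if real n * \<delta> \<le> \<bar>sl (gd q) xs ys\<bar> then 1 else 0))"
  proof (rule sum_mono, clarify)
    fix xs ys assume b: "(xs, ys) \<in> (blocks n :: ('a list \<times> 'b list) set)"
    then have L: "length xs = n" "length ys = n" by (auto simp: blocks_def)
    have b0: "0 \<le> bp q xs ys" using bp_nonneg[of q xs ys] nn L by auto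
    show "bp q xs ys * (if xs \<notin> typS q n (2 powr (-(real n * (Hc q + \<delta>)))) ys then 1 else 0)
       \<le> bp q xs ys * (if real n * \<delta> \<le> \<bar>sl (gd q) xs ys\<bar> then 1 else 0)"
    proof (cases "bp q xs ys = 0")
      case False
      then have "0 < bp q xs ys" using b0 by simp
      then show ?thesis using not_typS_dev[of q xs n ys \<delta>, OF nn L] b0 by auto
    qed simp
  qed
  also have "\<dots> \<le> real n * Vq q / (real n * \<delta>)^2"
    unfolding Vq_def by (rule chebyshev_blocks[OF s1 sum_q_gd[OF s1] nn t])
  finally show ?thesis .
qed

definition dec :: "('a list \<Rightarrow> nat) \<Rightarrow> ('b list \<Rightarrow> 'a list set) \<Rightarrow> nat \<Rightarrow> 'b list \<Rightarrow> 'a list" where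
  "dec c S k ys = (if \<exists>x\<in>S ys. c x = k then (SOME x. x \<in> S ys \<and> c x = k) else [])"

lemma dec_correct:
  assumes "xs \<in> S ys" "\<forall>x'\<in>S ys - {xs}. c x' \<noteq> c xs"
  shows "dec c S (c xs) ys = xs"
proof -
  have ex: "\<exists>x\<in>S ys. c x = c xs" using assms by blast
  have "(SOME x. x \<in> S ys \<and> c x = c xs) \<in> S ys \<and> c (SOME x. x \<in> S ys \<and> c x = c xs) = c xs"
    by (rule someI[of _ xs]) (use assms in simp)
  then have "(SOME x. x \<in> S ys \<and> c x = c xs) = xs" using assms(2) by blast
  then show ?thesis using ex by (simp add: dec_def)
qed

lemma err_bound:
  assumes fin: "finite (S ys)"
  shows "(if dec c S (c xs) ys \<noteq> xs then 1 else 0 :: real)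
    \<le> (if xs \<notin> S ys then 1 else 0) + (\<Sum>x'\<in>S ys - {xs}. if c x' = c xs then 1 else 0)"
proof (cases "xs \<in> S ys \<and> (\<forall>x'\<in>S ys - {xs}. c x' \<noteq> c xs)")
  case True then show ?thesis using dec_correct[of xs S ys c] by (simp add: sum_nonneg)
next
  case False
  show ?thesis
  proof (cases "xs \<in> S ys")
    case True
    then obtain x' where x': "x' \<in> S ys - {xs}" "c x' = c xs" using False by blast
    have "(1::real) \<le> (\<Sum>x'\<in>S ys - {xs}. if c x' = c xs then 1 else 0)"
      using member_le_sum[of x' "S ys - {xs}" "\<lambda>x'. if c x' = c xs then 1 else (0::real)"] x' fin by auto
    then show ?thesis by auto
  next
    case False then show ?thesis by (simp add: sum_nonneg)
  qed
qed



lemma code_exists: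
  fixes q :: "'a::finite \<Rightarrow> 'b::finite \<Rightarrow> real"
  assumes nn: "\<And>x y. 0 \<le> q x y" and s1: "(\<Sum>(x,y)\<in>UNIV. q x y) = 1"
    and K: "0 < K" and t: "0 < real n * \<delta>"
  shows "\<exists>(c::'a list \<Rightarrow> nat) (d::nat \<Rightarrow> 'b list \<Rightarrow> 'a list). (\<forall>xs. length xs = n \<longrightarrow> c xs < K) \<and>
    (\<Sum>(xs,ys)\<in>blocks n. bp q xs ys * (if d (c xs) ys \<noteq> xs then 1 else 0))
      \<le> real n * Vq q / (real n * \<delta>)^2 + 2 powr (real n * (Hc q + \<delta>)) / real K"
proof -
  define T where "T = 2 powr (-(real n * (Hc q + \<delta>)))"
  have T: "0 < T" by (simp add: T_def)
  have iT: "1 / T = 2 powr (real n * (Hc q + \<delta>))" by (simp add: T_def powr_minus divide_inverse)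
  define S where "S = typS q n T"
  define L where "L = {xs::'a list. length xs = n}"
  define C where "C = PiE L (\<lambda>_. {..<K})"
  have finL: "finite L" by (simp add: L_def)
  have finC: "finite C" unfolding C_def using finL by (simp add: finite_PiE)
  have Cne: "C \<noteq> {}" unfolding C_def using K by (simp add: PiE_eq_empty_iff lessThan_empty_iff)
  define A where "A = (\<Sum>(xs,ys)\<in>blocks n. bp q xs ys * (if xs \<notin> S ys then 1 else (0::real)))"
  have A: "A \<le> real n * Vq q / (real n * \<delta>)^2"
    unfolding A_def S_def T_def by (rule dev_prob[OF nn s1 t])
  define E where "E = (\<lambda>c xs ys. bp q xs ys * (if dec c S (c xs) ys \<noteq> xs then 1 else (0::real)))"
  have pw: "(\<Sum>c\<in>C. E c xs ys) \<le> real (card C) * (bp q xs ys * (if xs \<notin> S ys then 1 else 0) + bp q xs ys / (T * real K))"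
    if b: "(xs, ys) \<in> blocks n" for xs ys
  proof -
    have L2: "length xs = n" "length ys = n" using b by (auto simp: blocks_def)
    have b0: "0 \<le> bp q xs ys" using bp_nonneg[of q xs ys] nn L2 by auto
    have finS: "finite (S ys)" by (simp add: S_def)
    have xsL: "xs \<in> L" using L2 by (simp add: L_def)
    have SL: "S ys \<subseteq> L" by (auto simp: S_def L_def typS_def)
    have "(\<Sum>c\<in>C. E c xs ys) \<le> (\<Sum>c\<in>C. bp q xs ys * ((if xs \<notin> S ys then 1 else 0) + (\<Sum>x'\<in>S ys - {xs}. if c x' = c xs then 1 else 0)))"
      unfolding E_def by (rule sum_mono, rule mult_left_mono[OF err_bound[of S ys, OF finS] b0])
    also have "\<dots> = bp q xs ys * (real (card C) * (if xs \<notin> S ys then 1 else 0) + (\<Sum>x'\<in>S ys - {xs}. \<Sum>c\<in>C. if c x' = c xs then 1 else 0))"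
      by (simp add: sum_distrib_left[symmetric] sum.distrib sum.swap[of _ C])
    also have "(\<Sum>x'\<in>S ys - {xs}. \<Sum>c\<in>C. if c x' = c xs then 1 else (0::real)) = (\<Sum>x'\<in>S ys - {xs}. real (card C) / real K)"
    proof (rule sum.cong[OF refl])
      fix x' assume x'0: "x' \<in> S ys - {xs}"
      then have x': "x' \<in> L" "x' \<noteq> xs" using SL by auto
      have "(\<Sum>c\<in>C. if c x' = c xs then 1 else (0::real)) = real (card {c\<in>C. c x' = c xs})"
        by (rule sum_indicator_card[OF finC])
      also have "\<dots> = real (card C) / real K"
        using coloring_card[OF finL _ xsL, of x' K] x' SL K unfolding C_def
        by (simp add: field_simps flip: of_nat_mult)
      finally show "(\<Sum>c\<in>C. if c x' = c xs then 1 else (0::real)) = real (card C) / real K" .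
    qed
    also have "(\<Sum>x'\<in>S ys - {xs}. real (card C) / real K) = real (card (S ys - {xs})) * real (card C) / real K"
      by simp
    finally have 1: "(\<Sum>c\<in>C. E c xs ys) \<le> bp q xs ys * (real (card C) * (if xs \<notin> S ys then 1 else 0)
        + real (card (S ys - {xs})) * real (card C) / real K)" .
    have 2: "bp q xs ys * real (card (S ys - {xs})) \<le> bp q xs ys * (1 / T)"
    proof (cases "bp q xs ys = 0")
      case False
      then have pos: "0 < bp q xs ys" using b0 by simp
      have "real (card (S ys - {xs})) \<le> real (card (S ys))" using finS by (simp add: card_mono)
      also have "\<dots> \<le> 1 / T" unfolding S_def
        by (rule card_typS[OF nn T L2(2) prod_qY_pos[OF nn _ pos]]) (use L2 in simp)
      finally show ?thesis using b0 by (rule mult_left_mono)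
    qed simp
    have "bp q xs ys * (real (card (S ys - {xs})) * real (card C) / real K) \<le> bp q xs ys * (1/T) * real (card C) / real K"
      using mult_right_mono[OF 2, of "real (card C) / real K"] K by (simp add: mult.assoc)
    then show ?thesis using 1 by (simp add: algebra_simps)
  qed
  have "(\<Sum>c\<in>C. \<Sum>(xs,ys)\<in>blocks n. E c xs ys) = (\<Sum>(xs,ys)\<in>blocks n. \<Sum>c\<in>C. E c xs ys)"
    by (simp add: case_prod_unfold sum.swap[of _ C])
  also have "\<dots> \<le> (\<Sum>(xs,ys)\<in>blocks n. real (card C) * (bp q xs ys * (if xs \<notin> S ys then 1 else 0) + bp q xs ys / (T * real K)))"
    by (rule sum_mono) (use pw in auto)
  also have "\<dots> = real (card C) * (A + (\<Sum>(xs,ys)\<in>blocks n. bp q xs ys) / (T * real K))"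
    unfolding A_def by (simp add: case_prod_unfold sum.distrib sum_divide_distrib sum_distrib_left algebra_simps)
  also have "\<dots> = real (card C) * (A + 1 / (T * real K))"
    using sum_bp[OF s1, of n] by simp
  finally obtain c where cC: "c \<in> C" and cb: "(\<Sum>(xs,ys)\<in>blocks n. E c xs ys) \<le> A + 1 / (T * real K)"
    using exists_le_avg[OF finC Cne] by blast
  have "1 / (T * real K) = 2 powr (real n * (Hc q + \<delta>)) / real K" using iT by (metis divide_divide_eq_left)
  then have "(\<Sum>(xs,ys)\<in>blocks n. E c xs ys) \<le> real n * Vq q / (real n * \<delta>)^2 + 2 powr (real n * (Hc q + \<delta>)) / real K"
    using cb A by linarith
  moreover have "\<forall>xs. length xs = n \<longrightarrow> c xs < K" using cC by (auto simp: C_def L_def PiE_iff)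
  ultimately show ?thesis unfolding E_def by blast
qed



lemma blocks_eq: "blocks n = {xs. length xs = n} \<times> {ys. length ys = n}" by (auto simp: blocks_def)

lemma prod_qY_nonneg: "(\<And>x y. 0 \<le> q x y) \<Longrightarrow> 0 \<le> prod_list (map (qY q) ys)"
  by (induction ys) (auto simp: qY_def intro!: sum_nonneg mult_nonneg_nonneg)

lemma converse_bound:
  fixes q :: "'a::finite \<Rightarrow> 'b::finite \<Rightarrow> real" and dx :: "'k \<Rightarrow> 'b list \<Rightarrow> 'a list"
  assumes nn: "\<And>x y. 0 \<le> q x y" and s1: "(\<Sum>(x,y)\<in>UNIV. q x y) = 1" and t: "0 < real n * \<delta>"
    and M: "finite M" and eM: "\<And>xs ys. (xs, ys) \<in> blocks n \<Longrightarrow> e xs ys \<in> M"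
  shows "(\<Sum>(xs,ys)\<in>blocks n. bp q xs ys * (if dx (e xs ys) ys = xs then 1 else 0))
     \<le> real n * Vq q / (real n * \<delta>)^2 + real (card M) * 2 powr (-(real n * (Hc q - \<delta>)))"
proof -
  define T where "T = 2 powr (-(real n * (Hc q - \<delta>)))"
  have T: "0 < T" by (simp add: T_def)
  define Im where "Im ys = (\<lambda>k. dx k ys) ` M" for ys
  have pw: "bp q xs ys * (if dx (e xs ys) ys = xs then 1 else 0)
     \<le> bp q xs ys * (if real n * \<delta> \<le> \<bar>sl (gd q) xs ys\<bar> then 1 else 0)
       + T * prod_list (map (qY q) ys) * (if xs \<in> Im ys then 1 else 0)"
    if b: "(xs, ys) \<in> blocks n" for xs ys
  proof -
    have L2: "length xs = n" "length ys = n" using b by (auto simp: blocks_def)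
    have b0: "0 \<le> bp q xs ys" using bp_nonneg[of q xs ys] nn L2 by auto
    have P0: "0 \<le> T * prod_list (map (qY q) ys)" using T prod_qY_nonneg[of q ys] nn by simp
    show ?thesis
    proof (cases "bp q xs ys = 0")
      case True then show ?thesis using P0 by simp
    next
      case False
      then have pos: "0 < bp q xs ys" using b0 by simp
      show ?thesis
      proof (cases "T * prod_list (map (qY q) ys) < bp q xs ys")
        case True
        then have "real n * \<delta> \<le> \<bar>sl (gd q) xs ys\<bar>"
          using in_typS'_dev[of q xs n ys \<delta>, OF nn L2 pos] by (simp add: T_def)
        then show ?thesis using P0 b0 by simp
      next
        case False
        have "dx (e xs ys) ys = xs \<Longrightarrow> xs \<in> Im ys" using eM[OF b] unfolding Im_def by (metis image_eqI)
        then show ?thesis using False b0 by auto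
      qed
    qed
  qed
  have "(\<Sum>(xs,ys)\<in>blocks n. bp q xs ys * (if dx (e xs ys) ys = xs then 1 else 0))
     \<le> (\<Sum>(xs,ys)\<in>blocks n. bp q xs ys * (if real n * \<delta> \<le> \<bar>sl (gd q) xs ys\<bar> then 1 else 0))
       + (\<Sum>(xs,ys)\<in>blocks n. T * prod_list (map (qY q) ys) * (if xs \<in> Im ys then 1 else 0))"
    by (subst sum.distrib[symmetric]) (rule sum_mono, use pw in auto)
  also have "(\<Sum>(xs,ys)\<in>blocks n. bp q xs ys * (if real n * \<delta> \<le> \<bar>sl (gd q) xs ys\<bar> then 1 else 0))
      \<le> real n * Vq q / (real n * \<delta>)^2"
    unfolding Vq_def by (rule chebyshev_blocks[OF s1 sum_q_gd[OF s1] nn t])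
  also have "(\<Sum>(xs,ys)\<in>blocks n. T * prod_list (map (qY q) ys) * (if xs \<in> Im ys then 1 else 0))
      = (\<Sum>ys\<in>{ys. length ys = n}. T * prod_list (map (qY q) ys) * (\<Sum>xs\<in>{xs::'a list. length xs = n}. if xs \<in> Im ys then 1 else 0))"
    unfolding blocks_eq by (simp add: sum.cartesian_product[symmetric] sum.swap[of _ "{xs::'a list. length xs = n}"] sum_distrib_left)
  also have "\<dots> \<le> (\<Sum>ys\<in>{ys. length ys = n}. T * prod_list (map (qY q) ys) * real (card M))"
  proof (rule sum_mono)
    fix ys :: "'b list"
    have "(\<Sum>xs\<in>{xs::'a list. length xs = n}. if xs \<in> Im ys then 1 else (0::real))
        = real (card {xs\<in>{xs::'a list. length xs = n}. xs \<in> Im ys})"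
      by (rule sum_indicator_card) simp
    also have "\<dots> \<le> real (card (Im ys))"
      using M unfolding of_nat_le_iff Im_def by (intro card_mono) auto
    also have "\<dots> \<le> real (card M)" unfolding Im_def using M by (simp add: card_image_le)
    finally show "T * prod_list (map (qY q) ys) * (\<Sum>xs\<in>{xs::'a list. length xs = n}. if xs \<in> Im ys then 1 else 0)
        \<le> T * prod_list (map (qY q) ys) * real (card M)"
      using T prod_qY_nonneg[of q ys] nn by (simp add: mult_left_mono)
  qed
  also have "\<dots> = T * real (card M) * (\<Sum>ys\<in>{ys. length ys = n}. \<Sum>xs\<in>{xs::'a list. length xs = n}. bp q xs ys)"
    by (simp add: sum_bp_x sum_distrib_left algebra_simps)
  also have "(\<Sum>ys\<in>{ys. length ys = n}. \<Sum>xs\<in>{xs::'a list. length xs = n}. bp q xs ys) = 1"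
    using sum_bp[OF s1, of n] unfolding blocks_eq
    by (simp add: sum.cartesian_product[symmetric] sum.swap[of _ "{xs::'a list. length xs = n}"])
  finally show ?thesis by (simp add: T_def mult.commute)
qed



lemma marg_nonneg: "(\<And>\<omega>. \<omega> \<in> \<Omega> \<Longrightarrow> 0 \<le> p \<omega>) \<Longrightarrow> 0 \<le> marg \<Omega> p h v"
  unfolding marg_def by (rule sum_nonneg) auto

lemma marg_ge: "finite \<Omega> \<Longrightarrow> (\<And>\<omega>. \<omega> \<in> \<Omega> \<Longrightarrow> 0 \<le> p \<omega>) \<Longrightarrow> \<omega> \<in> \<Omega> \<Longrightarrow> p \<omega> \<le> marg \<Omega> p h (h \<omega>)"
  unfolding marg_def by (rule member_le_sum) auto

lemma marg_pos: "finite \<Omega> \<Longrightarrow> (\<And>\<omega>. \<omega> \<in> \<Omega> \<Longrightarrow> 0 \<le> p \<omega>) \<Longrightarrow> \<omega> \<in> \<Omega> \<Longrightarrow> 0 < p \<omega> \<Longrightarrow> 0 < marg \<Omega> p h (h \<omega>)"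
  using marg_ge[of \<Omega> p \<omega> h] by fastforce

lemma sum_group:
  assumes "finite \<Omega>"
  shows "(\<Sum>\<omega>\<in>\<Omega>. p \<omega> * f (h \<omega>)) = (\<Sum>v\<in>h ` \<Omega>. marg \<Omega> p h v * f v)"
proof -
  have "(\<Sum>\<omega>\<in>\<Omega>. p \<omega> * f (h \<omega>)) = (\<Sum>v\<in>h ` \<Omega>. \<Sum>\<omega>\<in>{\<omega>\<in>\<Omega>. h \<omega> = v}. p \<omega> * f (h \<omega>))"
    by (rule sum.image_gen[OF assms])
  also have "\<dots> = (\<Sum>v\<in>h ` \<Omega>. marg \<Omega> p h v * f v)"
    unfolding marg_def by (rule sum.cong[OF refl]) (simp add: sum_distrib_right)
  finally show ?thesis .
qed

lemma marg_sum_fst: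
  assumes fin: "finite \<Omega>"
  shows "(\<Sum>f\<in>F ` \<Omega>. marg \<Omega> p (\<lambda>w. (F w, G w)) (f, g)) = marg \<Omega> p G g"
proof -
  let ?S = "{\<omega>\<in>\<Omega>. G \<omega> = g}"
  have finS: "finite ?S" using fin by simp
  have "marg \<Omega> p G g = (\<Sum>f\<in>F ` ?S. \<Sum>\<omega>\<in>{\<omega>\<in>?S. F \<omega> = f}. p \<omega>)"
    unfolding marg_def by (rule sum.image_gen[OF finS])
  also have "\<dots> = (\<Sum>f\<in>F ` ?S. marg \<Omega> p (\<lambda>w. (F w, G w)) (f, g))"
    unfolding marg_def by (rule sum.cong[OF refl]) (rule sum.cong, auto)
  also have "\<dots> = (\<Sum>f\<in>F ` \<Omega>. marg \<Omega> p (\<lambda>w. (F w, G w)) (f, g))"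
  proof (rule sum.mono_neutral_left)
    show "finite (F ` \<Omega>)" using fin by simp
    show "F ` ?S \<subseteq> F ` \<Omega>" by auto
    show "\<forall>i\<in>F ` \<Omega> - F ` ?S. marg \<Omega> p (\<lambda>w. (F w, G w)) (i, g) = 0"
      unfolding marg_def by (force simp: image_iff intro!: sum.neutral)
  qed
  finally show ?thesis by simp
qed

lemma cond_ent_nonneg:
  assumes fin: "finite \<Omega>" and nn: "\<And>\<omega>. \<omega> \<in> \<Omega> \<Longrightarrow> 0 \<le> p \<omega>"
  shows "0 \<le> cond_ent \<Omega> p F G"
proof -
  have "p \<omega> * log 2 (marg \<Omega> p (\<lambda>w. (F w, G w)) (F \<omega>, G \<omega>) / marg \<Omega> p G (G \<omega>)) \<le> 0"
    if w: "\<omega> \<in> \<Omega>" for \<omega>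
  proof (cases "p \<omega> = 0")
    case False
    then have pw: "0 < p \<omega>" using nn[OF w] by simp
    have a: "0 < marg \<Omega> p (\<lambda>w. (F w, G w)) (F \<omega>, G \<omega>)"
      using marg_pos[where p=p and h="\<lambda>w. (F w, G w)", OF fin nn w pw] by simp
    have "marg \<Omega> p (\<lambda>w. (F w, G w)) (F \<omega>, G \<omega>) \<le> marg \<Omega> p G (G \<omega>)"
      unfolding marg_def by (rule sum_mono2) (use fin nn in auto)
    then have "log 2 (marg \<Omega> p (\<lambda>w. (F w, G w)) (F \<omega>, G \<omega>) / marg \<Omega> p G (G \<omega>)) \<le> 0"
      using a by (simp add: divide_le_eq_1)
    then show ?thesis using pw by (simp add: mult_nonneg_nonpos)
  qed simp
  then show ?thesis unfolding cond_ent_def by (simp add: sum_nonpos)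
qed

lemma log2_le: "0 < r \<Longrightarrow> log 2 r \<le> (r - 1) / ln 2"
  using ln_le_minus_one[of r] by (simp add: log_def divide_right_mono)

lemma cond_ent_mono:
  assumes fin: "finite \<Omega>" and nn: "\<And>\<omega>. \<omega> \<in> \<Omega> \<Longrightarrow> 0 \<le> p \<omega>"
  shows "cond_ent \<Omega> p F (\<lambda>w. (H w, G w)) \<le> cond_ent \<Omega> p F G"
proof -
  have mn: "\<And>h v. 0 \<le> marg \<Omega> p h v" by (rule marg_nonneg) (rule nn)
  define mFG where "mFG = marg \<Omega> p (\<lambda>w. (F w, G w))"
  define mG where "mG = marg \<Omega> p G"
  define mHG where "mHG = marg \<Omega> p (\<lambda>w. (H w, G w))"
  define k where "k = (\<lambda>w. (F w, (H w, G w)))"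
  define mk where "mk = marg \<Omega> p k"
  define R where "R = (\<lambda>(f,h,g). mFG (f,g) * mHG (h,g) / (mG g * mk (f,h,g)))"
  have pw: "p \<omega> * (log 2 (mk (k \<omega>) / mHG (H \<omega>, G \<omega>)) - log 2 (mFG (F \<omega>, G \<omega>) / mG (G \<omega>)))
      \<ge> - p \<omega> * (R (k \<omega>) - 1) / ln 2" if w: "\<omega> \<in> \<Omega>" for \<omega>
  proof (cases "p \<omega> = 0")
    case False
    then have pp: "0 < p \<omega>" using nn[OF w] by simp
    have p1: "0 < mk (k \<omega>)" unfolding mk_def by (rule marg_pos[where p=p and h=k, OF fin nn w pp])
    have p2: "0 < mHG (H \<omega>, G \<omega>)" unfolding mHG_def using marg_pos[where p=p and h="\<lambda>w. (H w, G w)", OF fin nn w pp] by simp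
    have p3: "0 < mFG (F \<omega>, G \<omega>)" unfolding mFG_def using marg_pos[where p=p and h="\<lambda>w. (F w, G w)", OF fin nn w pp] by simp
    have p4: "0 < mG (G \<omega>)" unfolding mG_def using marg_pos[where p=p and h=G, OF fin nn w pp] by simp
    have r: "R (k \<omega>) = mFG (F \<omega>, G \<omega>) * mHG (H \<omega>, G \<omega>) / (mG (G \<omega>) * mk (k \<omega>))"
      by (simp add: R_def k_def)
    have rp: "0 < R (k \<omega>)" using r p1 p2 p3 p4 by simp
    have "log 2 (mk (k \<omega>) / mHG (H \<omega>, G \<omega>)) - log 2 (mFG (F \<omega>, G \<omega>) / mG (G \<omega>)) = - log 2 (R (k \<omega>))"
      using p1 p2 p3 p4 unfolding r by (simp add: log_divide_pos log_mult_pos)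
    also have "\<dots> \<ge> - ((R (k \<omega>) - 1) / ln 2)" using log2_le[OF rp] by simp
    finally have X: "- ((R (k \<omega>) - 1) / ln 2) \<le> log 2 (mk (k \<omega>) / mHG (H \<omega>, G \<omega>)) - log 2 (mFG (F \<omega>, G \<omega>) / mG (G \<omega>))" .
    have "p \<omega> * (- ((R (k \<omega>) - 1) / ln 2)) \<le> p \<omega> * (log 2 (mk (k \<omega>) / mHG (H \<omega>, G \<omega>)) - log 2 (mFG (F \<omega>, G \<omega>) / mG (G \<omega>)))"
      using mult_left_mono[OF X, of "p \<omega>"] pp by simp
    moreover have "- p \<omega> * (R (k \<omega>) - 1) / ln 2 = p \<omega> * (- ((R (k \<omega>) - 1) / ln 2))" by simp
    ultimately show ?thesis by simp
  qed simp
  have sumR: "(\<Sum>\<omega>\<in>\<Omega>. p \<omega> * R (k \<omega>)) \<le> (\<Sum>\<omega>\<in>\<Omega>. p \<omega>)"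
  proof -
    have "(\<Sum>\<omega>\<in>\<Omega>. p \<omega> * R (k \<omega>)) = (\<Sum>v\<in>k ` \<Omega>. mk v * R v)"
      unfolding mk_def by (rule sum_group[OF fin])
    also have "\<dots> \<le> (\<Sum>v\<in>k ` \<Omega>. (\<lambda>(f,h,g). mFG (f,g) * mHG (h,g) / mG g) v)"
    proof (rule sum_mono)
      fix v assume "v \<in> k ` \<Omega>"
      obtain f h g where v: "v = (f,h,g)" by (cases v) auto
      have n1: "0 \<le> mFG (f,g) * mHG (h,g) / mG g" unfolding mFG_def mHG_def mG_def
        by (intro divide_nonneg_nonneg mult_nonneg_nonneg mn)
      show "mk v * R v \<le> (\<lambda>(f,h,g). mFG (f,g) * mHG (h,g) / mG g) v"
      proof (cases "mk v = 0")
        case True then show ?thesis using n1 v by simp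
      next
        case False then show ?thesis using v by (simp add: R_def)
      qed
    qed
    also have "\<dots> \<le> (\<Sum>v\<in>F ` \<Omega> \<times> (H ` \<Omega> \<times> G ` \<Omega>). (\<lambda>(f,h,g). mFG (f,g) * mHG (h,g) / mG g) v)"
    proof (rule sum_mono2)
      show "finite (F ` \<Omega> \<times> (H ` \<Omega> \<times> G ` \<Omega>))" using fin by simp
      show "k ` \<Omega> \<subseteq> F ` \<Omega> \<times> (H ` \<Omega> \<times> G ` \<Omega>)" by (auto simp: k_def)
      show "\<And>v. v \<in> F ` \<Omega> \<times> (H ` \<Omega> \<times> G ` \<Omega>) - k ` \<Omega> \<Longrightarrow> 0 \<le> (\<lambda>(f,h,g). mFG (f,g) * mHG (h,g) / mG g) v"
        unfolding mFG_def mHG_def mG_def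
        by (auto intro!: divide_nonneg_nonneg mult_nonneg_nonneg mn)
    qed
    also have "\<dots> = (\<Sum>f\<in>F ` \<Omega>. \<Sum>h\<in>H ` \<Omega>. \<Sum>g\<in>G ` \<Omega>. mFG (f,g) * mHG (h,g) / mG g)"
      by (simp add: sum.cartesian_product')
    also have "\<dots> = (\<Sum>f\<in>F ` \<Omega>. \<Sum>g\<in>G ` \<Omega>. \<Sum>h\<in>H ` \<Omega>. mFG (f,g) * mHG (h,g) / mG g)"
      by (rule sum.cong[OF refl], rule sum.swap)
    also have "\<dots> = (\<Sum>g\<in>G ` \<Omega>. \<Sum>f\<in>F ` \<Omega>. \<Sum>h\<in>H ` \<Omega>. mFG (f,g) * mHG (h,g) / mG g)"
      by (rule sum.swap)
    also have "\<dots> = (\<Sum>g\<in>G ` \<Omega>. (\<Sum>f\<in>F ` \<Omega>. mFG (f,g)) * (\<Sum>h\<in>H ` \<Omega>. mHG (h,g)) / mG g)"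
      by (simp add: sum_product sum_divide_distrib)
    also have "\<dots> = (\<Sum>g\<in>G ` \<Omega>. mG g * mG g / mG g)"
      unfolding mFG_def mHG_def mG_def by (simp add: marg_sum_fst[OF fin, where F=F] marg_sum_fst[OF fin, where F=H])
    also have "\<dots> = (\<Sum>g\<in>G ` \<Omega>. mG g)" by (rule sum.cong) auto
    also have "\<dots> = (\<Sum>\<omega>\<in>\<Omega>. p \<omega>)"
      using sum_group[OF fin, of p "\<lambda>_. 1" G] by (simp add: mG_def)
    finally show ?thesis .
  qed
  have "(\<Sum>\<omega>\<in>\<Omega>. - p \<omega> * (R (k \<omega>) - 1) / ln 2) \<le>
      (\<Sum>\<omega>\<in>\<Omega>. p \<omega> * (log 2 (mk (k \<omega>) / mHG (H \<omega>, G \<omega>)) - log 2 (mFG (F \<omega>, G \<omega>) / mG (G \<omega>))))"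
    by (rule sum_mono) (use pw in auto)
  moreover have "(\<Sum>\<omega>\<in>\<Omega>. - p \<omega> * (R (k \<omega>) - 1) / ln 2) = ((\<Sum>\<omega>\<in>\<Omega>. p \<omega>) - (\<Sum>\<omega>\<in>\<Omega>. p \<omega> * R (k \<omega>))) / ln 2"
    by (simp add: sum_divide_distrib[symmetric] sum_subtractf[symmetric] algebra_simps)
  moreover have "0 \<le> ((\<Sum>\<omega>\<in>\<Omega>. p \<omega>) - (\<Sum>\<omega>\<in>\<Omega>. p \<omega> * R (k \<omega>))) / ln 2"
    using sumR by simp
  ultimately have "0 \<le> (\<Sum>\<omega>\<in>\<Omega>. p \<omega> * (log 2 (mk (k \<omega>) / mHG (H \<omega>, G \<omega>)) - log 2 (mFG (F \<omega>, G \<omega>) / mG (G \<omega>))))"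
    by linarith
  then show ?thesis unfolding cond_ent_def mk_def mHG_def mFG_def mG_def k_def
    by (simp add: sum_subtractf algebra_simps)
qed



abbreviation "KK (tx::'x itself) (ty::'y itself) \<equiv> aux_card tx ty"

lemma sum_Omega:
  "(\<Sum>\<omega>\<in>Omega (TYPE('x::finite)) (TYPE('y::finite)). f \<omega>) =
   (\<Sum>(x,y)\<in>(UNIV::('x\<times>'y) set). \<Sum>(a,b)\<in>{..<aux_card TYPE('x) TYPE('y)} \<times> {..<aux_card TYPE('x) TYPE('y)}. f (a,b,x,y))"
proof -
  let ?A = "{..<aux_card TYPE('x) TYPE('y)}"
  have "(\<Sum>\<omega>\<in>Omega (TYPE('x)) (TYPE('y)). f \<omega>) = (\<Sum>a\<in>?A. \<Sum>b\<in>?A. \<Sum>z\<in>(UNIV::('x\<times>'y) set). f (a,b,z))"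
    unfolding Omega_def by (simp add: sum.cartesian_product' UNIV_Times_UNIV[symmetric] del: UNIV_Times_UNIV)
  also have "\<dots> = (\<Sum>a\<in>?A. \<Sum>z\<in>(UNIV::('x\<times>'y) set). \<Sum>b\<in>?A. f (a,b,z))"
    by (rule sum.cong[OF refl], rule sum.swap)
  also have "\<dots> = (\<Sum>z\<in>(UNIV::('x\<times>'y) set). \<Sum>a\<in>?A. \<Sum>b\<in>?A. f (a,b,z))"
    by (rule sum.swap)
  also have "\<dots> = (\<Sum>(x,y)\<in>(UNIV::('x\<times>'y) set). \<Sum>(a,b)\<in>?A \<times> ?A. f (a,b,x,y))"
    by (simp add: sum.cartesian_product' case_prod_unfold)
  finally show ?thesis .
qed

lemma finite_Omega[simp]: "finite (Omega (TYPE('x::finite)) (TYPE('y::finite)))"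
  unfolding Omega_def by simp

lemma marg_as_sum: "finite \<Omega> \<Longrightarrow> marg \<Omega> p h v = (\<Sum>\<omega>\<in>\<Omega>. if h \<omega> = v then p \<omega> else 0)"
  unfolding marg_def by (rule sum.inter_filter)

definition XY :: "nat \<times> nat \<times> 'x \<times> 'y \<Rightarrow> 'x \<times> 'y" where "XY \<omega> = snd (snd \<omega>)"

lemma Pss_nonneg: "p \<in> Pss Q \<Longrightarrow> \<omega> \<in> Omega TYPE('x) TYPE('y) \<Longrightarrow> 0 \<le> p \<omega>"
  for p :: "nat \<times> nat \<times> 'x::finite \<times> 'y::finite \<Rightarrow> real"
  unfolding Pss_def by blast

lemma marg_XY:
  fixes p :: "nat \<times> nat \<times> 'x::finite \<times> 'y::finite \<Rightarrow> real"
  assumes p: "p \<in> Pss Q"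
  shows "marg (Omega TYPE('x) TYPE('y)) p (\<lambda>\<omega>. h (XY \<omega>)) v = (\<Sum>z\<in>UNIV. if h z = v then pmf Q z else 0)"
proof -
  have "marg (Omega TYPE('x) TYPE('y)) p (\<lambda>\<omega>. h (XY \<omega>)) v =
     (\<Sum>(x,y)\<in>(UNIV::('x\<times>'y) set). \<Sum>(a,b)\<in>{..<aux_card TYPE('x) TYPE('y)} \<times> {..<aux_card TYPE('x) TYPE('y)}.
        if h (x,y) = v then p (a,b,x,y) else 0)"
    by (simp add: marg_as_sum sum_Omega XY_def)
  also have "\<dots> = (\<Sum>(x,y)\<in>(UNIV::('x\<times>'y) set). if h (x,y) = v then pmf Q (x,y) else 0)"
    using p unfolding Pss_def by (intro sum.cong refl) (auto simp: sum.If_cases)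
  also have "\<dots> = (\<Sum>z\<in>UNIV. if h z = v then pmf Q z else 0)"
    by (rule sum.cong) auto
  finally show ?thesis .
qed

lemma sum_XY:
  fixes p :: "nat \<times> nat \<times> 'x::finite \<times> 'y::finite \<Rightarrow> real"
  assumes p: "p \<in> Pss Q"
  shows "(\<Sum>\<omega>\<in>Omega TYPE('x) TYPE('y). p \<omega> * f (XY \<omega>)) = (\<Sum>z\<in>UNIV. pmf Q z * f z)"
proof -
  have "(\<Sum>\<omega>\<in>Omega TYPE('x) TYPE('y). p \<omega> * f (XY \<omega>)) =
     (\<Sum>(x,y)\<in>(UNIV::('x\<times>'y) set). (\<Sum>(a,b)\<in>{..<aux_card TYPE('x) TYPE('y)} \<times> {..<aux_card TYPE('x) TYPE('y)}. p (a,b,x,y)) * f (x,y))"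
    by (simp add: sum_Omega XY_def sum_distrib_right case_prod_unfold)
  also have "\<dots> = (\<Sum>(x,y)\<in>(UNIV::('x\<times>'y) set). pmf Q (x,y) * f (x,y))"
    using p unfolding Pss_def by simp
  finally show ?thesis by (simp add: case_prod_unfold)
qed

lemma cond_ent_XY_gen:
  fixes p :: "nat \<times> nat \<times> 'x::finite \<times> 'y::finite \<Rightarrow> real"
  assumes p: "p \<in> Pss Q"
  shows "cond_ent (Omega TYPE('x) TYPE('y)) p (\<lambda>\<omega>. F (XY \<omega>)) (\<lambda>\<omega>. G (XY \<omega>)) =
    - (\<Sum>z\<in>UNIV. pmf Q z * log 2 ((\<Sum>z'\<in>UNIV. if (F z', G z') = (F z, G z) then pmf Q z' else 0) /
                                   (\<Sum>z'\<in>UNIV. if G z' = G z then pmf Q z' else 0)))"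
  unfolding cond_ent_def
  using marg_XY[OF p, of "\<lambda>z. (F z, G z)"] marg_XY[OF p, of G]
    sum_XY[OF p, of "\<lambda>z. log 2 ((\<Sum>z'\<in>UNIV. if (F z', G z') = (F z, G z) then pmf Q z' else 0) /
                                   (\<Sum>z'\<in>UNIV. if G z' = G z then pmf Q z' else 0))"]
  by simp

definition qQ :: "('x \<times> 'y) pmf \<Rightarrow> 'x \<Rightarrow> 'y \<Rightarrow> real" where "qQ Q x y = pmf Q (x,y)"
definition qQs :: "('x \<times> 'y) pmf \<Rightarrow> 'y \<Rightarrow> 'x \<Rightarrow> real" where "qQs Q y x = pmf Q (x,y)"

lemma cond_ent_X_Y:
  fixes p :: "nat \<times> nat \<times> 'x::finite \<times> 'y::finite \<Rightarrow> real"
  assumes p: "p \<in> Pss Q"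
  shows "cond_ent (Omega TYPE('x) TYPE('y)) p (\<lambda>\<omega>. fst (XY \<omega>)) (\<lambda>\<omega>. snd (XY \<omega>)) = Hc (qQ Q)"
proof -
  have 1: "(\<Sum>z'\<in>UNIV. if (fst z', snd z') = (fst z, snd z) then pmf Q z' else 0) = pmf Q z" for z :: "'x \<times> 'y"
    by (simp add: sum.delta)
  have 2: "(\<Sum>z'\<in>UNIV. if snd z' = snd z then pmf Q z' else 0) = qY (qQ Q) (snd z)" for z :: "'x \<times> 'y"
    by (simp add: qY_def qQ_def UNIV_Times_UNIV[symmetric] sum.cartesian_product' del: UNIV_Times_UNIV)
  show ?thesis unfolding cond_ent_XY_gen[OF p] 1 2
    by (simp add: Hc_def qQ_def case_prod_unfold)
qed

lemma cond_ent_Y_X: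
  fixes p :: "nat \<times> nat \<times> 'x::finite \<times> 'y::finite \<Rightarrow> real"
  assumes p: "p \<in> Pss Q"
  shows "cond_ent (Omega TYPE('x) TYPE('y)) p (\<lambda>\<omega>. snd (XY \<omega>)) (\<lambda>\<omega>. fst (XY \<omega>)) = Hc (qQs Q)"
proof -
  have 1: "(\<Sum>z'\<in>UNIV. if (snd z', fst z') = (snd z, fst z) then pmf Q z' else 0) = pmf Q z" for z :: "'x \<times> 'y"
  proof -
    have "\<And>z'. ((snd z', fst z') = (snd z, fst z)) = (z' = z)" by (auto simp: prod_eq_iff)
    then show ?thesis by (simp add: sum.delta)
  qed
  have 2: "(\<Sum>z'\<in>UNIV. if fst z' = fst z then pmf Q z' else 0) = qY (qQs Q) (fst z)" for z :: "'x \<times> 'y"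
  proof -
    have "(\<Sum>z'\<in>UNIV. if fst z' = fst z then pmf Q z' else 0) = (\<Sum>x\<in>UNIV. \<Sum>y\<in>UNIV. if x = fst z then pmf Q (x,y) else 0)"
      by (simp add: UNIV_Times_UNIV[symmetric] sum.cartesian_product' del: UNIV_Times_UNIV)
    also have "\<dots> = (\<Sum>y\<in>UNIV. \<Sum>x\<in>UNIV. if x = fst z then pmf Q (x,y) else 0)" by (rule sum.swap)
    also have "\<dots> = qY (qQs Q) (fst z)" by (simp add: qY_def qQs_def)
    finally show ?thesis .
  qed
  have "cond_ent (Omega TYPE('x) TYPE('y)) p (\<lambda>\<omega>. snd (XY \<omega>)) (\<lambda>\<omega>. fst (XY \<omega>)) =
      - (\<Sum>z\<in>UNIV. pmf Q z * log 2 (pmf Q z / qY (qQs Q) (fst z)))"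
    unfolding cond_ent_XY_gen[OF p] 1 2 by simp
  also have "\<dots> = Hc (qQs Q)"
    unfolding Hc_def qQs_def
    by (simp add: UNIV_Times_UNIV[symmetric] sum.cartesian_product' sum.swap[of _ "UNIV::'y set"] del: UNIV_Times_UNIV)
  finally show ?thesis .
qed



definition Poly :: "('x::finite \<times> 'y::finite) pmf \<Rightarrow> (real \<times> real \<times> real) set" where
  "Poly Q = {(R0,R1,R2). 0 \<le> R0 \<and> 0 \<le> R1 \<and> 0 \<le> R2 \<and> Hc (qQ Q) \<le> R0 + R1 \<and> Hc (qQs Q) \<le> R0 + R2}"

lemma lam_X: "(\<lambda>(a::nat, b::nat, x::'x, y::'y). x) = (\<lambda>\<omega>. fst (XY \<omega>))" by (auto simp: XY_def fun_eq_iff)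
lemma lam_Y: "(\<lambda>(a::nat, b::nat, x::'x, y::'y). y) = (\<lambda>\<omega>. snd (XY \<omega>))" by (auto simp: XY_def fun_eq_iff)

lemma Rss_sub_Poly:
  fixes p :: "nat \<times> nat \<times> 'x::finite \<times> 'y::finite \<Rightarrow> real"
  assumes p: "p \<in> Pss Q"
  shows "Rss p \<subseteq> Poly Q"
proof
  fix R assume R: "R \<in> Rss p"
  obtain R0 R1 R2 where RR: "R = (R0,R1,R2)" by (cases R) auto
  let ?\<Omega> = "Omega TYPE('x) TYPE('y)"
  let ?X = "\<lambda>\<omega>::nat \<times> nat \<times> 'x \<times> 'y. fst (XY \<omega>)"
  let ?Y = "\<lambda>\<omega>::nat \<times> nat \<times> 'x \<times> 'y. snd (XY \<omega>)"
  let ?A = "\<lambda>(a::nat, b::nat, x::'x, y::'y). a"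
  let ?B = "\<lambda>(a::nat, b::nat, x::'x, y::'y). b"
  have nn: "\<And>\<omega>. \<omega> \<in> ?\<Omega> \<Longrightarrow> 0 \<le> p \<omega>" using Pss_nonneg[OF p] by blast
  have fin: "finite ?\<Omega>" by simp
  have h: "R0 \<ge> max (cond_ent ?\<Omega> p ?X (\<lambda>w. (?A w, ?Y w))) (cond_ent ?\<Omega> p ?Y (\<lambda>w. (?B w, ?X w)))"
     "R1 \<ge> cond_mi ?\<Omega> p ?X ?A ?Y" "R2 \<ge> cond_mi ?\<Omega> p ?Y ?B ?X"
    using R unfolding RR Rss_def Let_def lam_X lam_Y by auto
  have e1: "cond_ent ?\<Omega> p ?X ?Y = Hc (qQ Q)" by (rule cond_ent_X_Y[OF p])
  have e2: "cond_ent ?\<Omega> p ?Y ?X = Hc (qQs Q)" by (rule cond_ent_Y_X[OF p])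
  have m1: "cond_ent ?\<Omega> p ?X (\<lambda>w. (?A w, ?Y w)) \<le> cond_ent ?\<Omega> p ?X ?Y" by (rule cond_ent_mono[OF fin nn])
  have m2: "cond_ent ?\<Omega> p ?Y (\<lambda>w. (?B w, ?X w)) \<le> cond_ent ?\<Omega> p ?Y ?X" by (rule cond_ent_mono[OF fin nn])
  have n1: "0 \<le> cond_ent ?\<Omega> p ?X (\<lambda>w. (?A w, ?Y w))" by (rule cond_ent_nonneg[OF fin nn])
  have n2: "0 \<le> cond_ent ?\<Omega> p ?Y (\<lambda>w. (?B w, ?X w))" by (rule cond_ent_nonneg[OF fin nn])
  show "R \<in> Poly Q" unfolding RR Poly_def using h e1 e2 m1 m2 n1 n2 by (auto simp: cond_mi_def)
qed



definition alpha :: "real \<Rightarrow> ('x \<Rightarrow> nat) \<Rightarrow> nat \<Rightarrow> 'x \<Rightarrow> real" where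
  "alpha l \<iota> a x = (if a = 0 then 1 - l else if a = Suc (\<iota> x) then l else 0)"

definition prodp :: "('x::finite \<times> 'y::finite) pmf \<Rightarrow> (nat \<Rightarrow> 'x \<Rightarrow> real) \<Rightarrow> (nat \<Rightarrow> 'y \<Rightarrow> real) \<Rightarrow> nat \<times> nat \<times> 'x \<times> 'y \<Rightarrow> real" where
  "prodp Q \<alpha> \<beta> \<omega> = (if \<omega> \<in> Omega TYPE('x) TYPE('y) then
      (case \<omega> of (a,b,x,y) \<Rightarrow> pmf Q (x,y) * \<alpha> a x * \<beta> b y) else 0)"

lemma alpha_split: "alpha l \<iota> a x = (if a = 0 then 1 - l else 0) + (if a = Suc (\<iota> x) then l else 0)"
  by (simp add: alpha_def)

lemma sum_alpha: "Suc (\<iota> x) < K \<Longrightarrow> (\<Sum>a\<in>{..<K}. alpha l \<iota> a x) = 1"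
  by (simp add: alpha_split sum.distrib sum.delta)

lemma alpha_nonneg: "0 \<le> l \<Longrightarrow> l \<le> 1 \<Longrightarrow> 0 \<le> alpha l \<iota> a x"
  by (simp add: alpha_def)

lemma mem_Omega: "((a,b,x,y) \<in> Omega TYPE('x) TYPE('y)) = (a < aux_card TYPE('x) TYPE('y) \<and> b < aux_card TYPE('x) TYPE('y))"
  for x :: 'x and y :: 'y by (simp add: Omega_def)

lemma prodp_Pss:
  fixes Q :: "('x::finite \<times> 'y::finite) pmf"
  assumes an: "\<And>a x. 0 \<le> \<alpha> a x" and bn: "\<And>b y. 0 \<le> \<beta> b y"
    and as: "\<And>x. (\<Sum>a\<in>{..<aux_card TYPE('x) TYPE('y)}. \<alpha> a x) = 1"
    and bs: "\<And>y. (\<Sum>b\<in>{..<aux_card TYPE('x) TYPE('y)}. \<beta> b y) = 1"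
  shows "prodp Q \<alpha> \<beta> \<in> Pss Q"
  unfolding Pss_def
proof (intro CollectI conjI allI ballI impI)
  fix \<omega> :: "nat \<times> nat \<times> 'x \<times> 'y" assume "\<omega> \<notin> Omega TYPE('x) TYPE('y)"
  then show "prodp Q \<alpha> \<beta> \<omega> = 0" by (simp add: prodp_def)
next
  fix \<omega> :: "nat \<times> nat \<times> 'x \<times> 'y" assume "\<omega> \<in> Omega TYPE('x) TYPE('y)"
  then show "0 \<le> prodp Q \<alpha> \<beta> \<omega>" using an bn by (auto simp: prodp_def split: prod.split)
next
  fix x y
  have "(\<Sum>(a, b)\<in>{..<aux_card TYPE('x) TYPE('y)} \<times> {..<aux_card TYPE('x) TYPE('y)}. prodp Q \<alpha> \<beta> (a, b, x, y))
     = (\<Sum>a\<in>{..<aux_card TYPE('x) TYPE('y)}. \<Sum>b\<in>{..<aux_card TYPE('x) TYPE('y)}. pmf Q (x,y) * \<alpha> a x * \<beta> b y)"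
    by (simp add: sum.cartesian_product' prodp_def mem_Omega)
  also have "\<dots> = pmf Q (x,y) * ((\<Sum>a\<in>{..<aux_card TYPE('x) TYPE('y)}. \<alpha> a x) * (\<Sum>b\<in>{..<aux_card TYPE('x) TYPE('y)}. \<beta> b y))"
    unfolding sum_product by (simp add: sum_distrib_left mult.assoc)
  finally show "(\<Sum>(a, b)\<in>{..<aux_card TYPE('x) TYPE('y)} \<times> {..<aux_card TYPE('x) TYPE('y)}. prodp Q \<alpha> \<beta> (a, b, x, y)) = pmf Q (x, y)"
    using as bs by simp
qed

lemma card_lt_aux: "CARD('x::finite) < aux_card TYPE('x) TYPE('y::finite)"
proof -
  have "CARD('y) \<ge> 1" by (simp add: Suc_leI)
  then have "CARD('x) \<le> CARD('x) * CARD('y)" by simp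
  then show ?thesis unfolding aux_card_def by linarith
qed

lemma aux_card_comm: "aux_card TYPE('x) TYPE('y) = aux_card TYPE('y) TYPE('x)"
  by (simp add: aux_card_def mult.commute)



lemma ifz: "(if c then u else 0) * (v::real) = (if c then u * v else 0)" by simp

lemma marg_fiber: "marg \<Omega> p h v = sum p {\<omega>\<in>\<Omega>. h \<omega> = v}" by (simp add: marg_def)

lemma cond_ent_A:
  fixes Q :: "('x::finite \<times> 'y::finite) pmf" and \<iota> :: "'x \<Rightarrow> nat" and \<beta> :: "nat \<Rightarrow> 'y \<Rightarrow> real"
  assumes inj: "inj \<iota>" and rng: "\<And>x. Suc (\<iota> x) < aux_card TYPE('x) TYPE('y)"
    and l0: "0 \<le> l" and l1: "l \<le> 1"
    and bs: "\<And>y. (\<Sum>b\<in>{..<aux_card TYPE('x) TYPE('y)}. \<beta> b y) = 1"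
  shows "cond_ent (Omega TYPE('x) TYPE('y)) (prodp Q (alpha l \<iota>) \<beta>) (\<lambda>\<omega>. fst (XY \<omega>)) (\<lambda>\<omega>. (fst \<omega>, snd (XY \<omega>)))
     = (1 - l) * Hc (qQ Q)"
proof -
  let ?K = "aux_card TYPE('x) TYPE('y)"
  let ?\<Omega> = "Omega TYPE('x) TYPE('y)"
  let ?p = "prodp Q (alpha l \<iota>) \<beta>"
  let ?\<alpha> = "alpha l \<iota>"
  define D where "D a y = (\<Sum>x'\<in>UNIV. pmf Q (x',y) * ?\<alpha> a x')" for a y
  have m1: "marg ?\<Omega> ?p (\<lambda>w. (fst (XY w), (fst w, snd (XY w)))) (x,(a,y)) = pmf Q (x,y) * ?\<alpha> a x"
    if a: "a < ?K" for a x y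
  proof -
    have "{\<omega>\<in>?\<Omega>. (fst (XY \<omega>), (fst \<omega>, snd (XY \<omega>))) = (x,(a,y))} = (\<lambda>b. (a,b,x,y)) ` {..<?K}"
      using a by (auto simp: XY_def Omega_def image_iff)
    moreover have "inj_on (\<lambda>b. (a,b,x,y)) {..<?K}" by (auto simp: inj_on_def)
    ultimately have "marg ?\<Omega> ?p (\<lambda>w. (fst (XY w), (fst w, snd (XY w)))) (x,(a,y)) = (\<Sum>b\<in>{..<?K}. ?p (a,b,x,y))"
      by (simp add: marg_fiber sum.reindex)
    also have "\<dots> = (\<Sum>b\<in>{..<?K}. pmf Q (x,y) * ?\<alpha> a x * \<beta> b y)"
      using a by (intro sum.cong) (auto simp: prodp_def mem_Omega)
    also have "\<dots> = pmf Q (x,y) * ?\<alpha> a x" using bs by (simp add: sum_distrib_left[symmetric])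
    finally show ?thesis .
  qed
  have m2: "marg ?\<Omega> ?p (\<lambda>w. (fst w, snd (XY w))) (a,y) = D a y"
    if a: "a < ?K" for a y
  proof -
    have "{\<omega>\<in>?\<Omega>. (fst \<omega>, snd (XY \<omega>)) = (a,y)} = (\<lambda>(b,x). (a,b,x,y)) ` ({..<?K} \<times> UNIV)"
      using a by (auto simp: XY_def Omega_def image_iff)
    moreover have "inj_on (\<lambda>(b,x). (a,b,x::'x,y)) ({..<?K} \<times> UNIV)" by (auto simp: inj_on_def)
    ultimately have "marg ?\<Omega> ?p (\<lambda>w. (fst w, snd (XY w))) (a,y) = (\<Sum>(b,x)\<in>{..<?K} \<times> UNIV. ?p (a,b,x,y))"
      by (simp add: marg_fiber sum.reindex case_prod_unfold)
    also have "\<dots> = (\<Sum>b\<in>{..<?K}. \<Sum>x\<in>UNIV. pmf Q (x,y) * ?\<alpha> a x * \<beta> b y)"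
      using a by (simp add: sum.cartesian_product' prodp_def mem_Omega)
    also have "\<dots> = (\<Sum>x\<in>UNIV. \<Sum>b\<in>{..<?K}. pmf Q (x,y) * ?\<alpha> a x * \<beta> b y)" by (rule sum.swap)
    also have "\<dots> = D a y" using bs by (simp add: D_def sum_distrib_left[symmetric])
    finally show ?thesis .
  qed
  define L where "L a x y = log 2 (pmf Q (x,y) * ?\<alpha> a x / D a y)" for a x y
  have "cond_ent ?\<Omega> ?p (\<lambda>\<omega>. fst (XY \<omega>)) (\<lambda>\<omega>. (fst \<omega>, snd (XY \<omega>))) =
     - (\<Sum>\<omega>\<in>?\<Omega>. ?p \<omega> * L (fst \<omega>) (fst (XY \<omega>)) (snd (XY \<omega>)))"
    unfolding cond_ent_def
  proof (intro arg_cong[where f=uminus] sum.cong refl)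
    fix \<omega> assume w: "\<omega> \<in> ?\<Omega>"
    obtain a b x y where wd: "\<omega> = (a,b,x,y)" by (cases \<omega>) auto
    have a: "a < ?K" using w wd by (simp add: mem_Omega)
    show "?p \<omega> * log 2 (marg ?\<Omega> ?p (\<lambda>w. (fst (XY w), (fst w, snd (XY w)))) (fst (XY \<omega>), (fst \<omega>, snd (XY \<omega>))) /
          marg ?\<Omega> ?p (\<lambda>w. (fst w, snd (XY w))) (fst \<omega>, snd (XY \<omega>))) = ?p \<omega> * L (fst \<omega>) (fst (XY \<omega>)) (snd (XY \<omega>))"
      using m1[OF a, of x y] m2[OF a, of y] by (simp add: wd XY_def L_def)
  qed
  also have "\<dots> = - (\<Sum>(x,y)\<in>(UNIV::('x\<times>'y) set). \<Sum>(a,b)\<in>{..<?K} \<times> {..<?K}. pmf Q (x,y) * ?\<alpha> a x * \<beta> b y * L a x y)"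
    by (simp add: sum_Omega prodp_def mem_Omega XY_def case_prod_unfold)
  also have "\<dots> = - (\<Sum>(x,y)\<in>(UNIV::('x\<times>'y) set). pmf Q (x,y) * (\<Sum>a\<in>{..<?K}. ?\<alpha> a x * L a x y))"
  proof -
    have "(\<Sum>(a,b)\<in>{..<?K} \<times> {..<?K}. pmf Q (x,y) * ?\<alpha> a x * \<beta> b y * L a x y) = pmf Q (x,y) * (\<Sum>a\<in>{..<?K}. ?\<alpha> a x * L a x y)"
      for x y
    proof -
      have "(\<Sum>(a,b)\<in>{..<?K} \<times> {..<?K}. pmf Q (x,y) * ?\<alpha> a x * \<beta> b y * L a x y)
         = (\<Sum>a\<in>{..<?K}. pmf Q (x,y) * ?\<alpha> a x * L a x y * (\<Sum>b\<in>{..<?K}. \<beta> b y))"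
        by (simp add: sum.cartesian_product' sum_distrib_left mult_ac)
      then show ?thesis using bs by (simp add: sum_distrib_left mult_ac)
    qed
    then show ?thesis by simp
  qed
  also have "\<dots> = - (\<Sum>(x,y)\<in>(UNIV::('x\<times>'y) set). pmf Q (x,y) * ((1 - l) * log 2 (pmf Q (x,y) / qY (qQ Q) y)))"
  proof -
    have "(\<Sum>a\<in>{..<?K}. ?\<alpha> a x * L a x y) = (1 - l) * log 2 (pmf Q (x,y) / qY (qQ Q) y)" for x y
    proof -
      have "(\<Sum>a\<in>{..<?K}. ?\<alpha> a x * L a x y) = (1 - l) * L 0 x y + l * L (Suc (\<iota> x)) x y"
        using rng[of x] by (simp add: alpha_split distrib_right sum.distrib ifz sum.delta)
      moreover have "l * L (Suc (\<iota> x)) x y = 0"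
      proof -
        have ax: "\<And>x'. ?\<alpha> (Suc (\<iota> x)) x' = (if x' = x then l else 0)"
          using inj by (auto simp: alpha_def inj_eq)
        have "D (Suc (\<iota> x)) y = (\<Sum>x'\<in>UNIV. pmf Q (x',y) * (if x' = x then l else 0))"
          unfolding D_def ax by (rule refl)
        also have "\<dots> = (\<Sum>x'\<in>UNIV. if x' = x then pmf Q (x',y) * l else 0)"
          by (rule sum.cong) auto
        also have "\<dots> = pmf Q (x,y) * l" by (simp add: sum.delta')
        finally have "D (Suc (\<iota> x)) y = pmf Q (x,y) * l" .
        moreover have "?\<alpha> (Suc (\<iota> x)) x = l" by (simp add: alpha_def)
        ultimately show ?thesis by (simp add: L_def log_def)
      qed
      moreover have "(1 - l) * L 0 x y = (1 - l) * log 2 (pmf Q (x,y) / qY (qQ Q) y)"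
      proof (cases "l = 1")
        case False
        then have "1 - l \<noteq> 0" by simp
        have "D 0 y = (1 - l) * qY (qQ Q) y"
          by (simp add: D_def alpha_def qY_def qQ_def sum_distrib_left mult.commute)
        then have "L 0 x y = log 2 (pmf Q (x,y) / qY (qQ Q) y)"
          using \<open>1 - l \<noteq> 0\<close> by (simp add: L_def alpha_def)
        then show ?thesis by simp
      qed simp
      ultimately show ?thesis by simp
    qed
    then show ?thesis by simp
  qed
  also have "\<dots> = (1 - l) * Hc (qQ Q)"
    by (simp add: Hc_def qQ_def sum_distrib_left case_prod_unfold mult_ac sum_negf)
  finally show ?thesis .
qed



lemma marg_reindex:
  assumes b: "bij_betw \<sigma> \<Omega>' \<Omega>"
  shows "marg \<Omega>' (\<lambda>\<omega>. p (\<sigma> \<omega>)) (\<lambda>\<omega>. h (\<sigma> \<omega>)) v = marg \<Omega> p h v"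
proof -
  have inj: "inj_on \<sigma> {\<omega>\<in>\<Omega>'. h (\<sigma> \<omega>) = v}" using b by (auto simp: bij_betw_def intro: inj_on_subset)
  have img: "\<sigma> ` {\<omega>\<in>\<Omega>'. h (\<sigma> \<omega>) = v} = {\<omega>\<in>\<Omega>. h \<omega> = v}" using b by (auto simp: bij_betw_def)
  show ?thesis unfolding marg_fiber using sum.reindex[OF inj, of p] img by simp
qed

lemma cond_ent_reindex:
  assumes b: "bij_betw \<sigma> \<Omega>' \<Omega>"
  shows "cond_ent \<Omega>' (\<lambda>\<omega>. p (\<sigma> \<omega>)) (\<lambda>\<omega>. F (\<sigma> \<omega>)) (\<lambda>\<omega>. G (\<sigma> \<omega>)) = cond_ent \<Omega> p F G"
proof -
  have "cond_ent \<Omega>' (\<lambda>\<omega>. p (\<sigma> \<omega>)) (\<lambda>\<omega>. F (\<sigma> \<omega>)) (\<lambda>\<omega>. G (\<sigma> \<omega>)) =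
     - (\<Sum>\<omega>\<in>\<Omega>'. p (\<sigma> \<omega>) * log 2 (marg \<Omega> p (\<lambda>w. (F w, G w)) (F (\<sigma> \<omega>), G (\<sigma> \<omega>)) / marg \<Omega> p G (G (\<sigma> \<omega>))))"
    unfolding cond_ent_def
    using marg_reindex[OF b, of p "\<lambda>w. (F w, G w)"] marg_reindex[OF b, of p G] by simp
  also have "\<dots> = cond_ent \<Omega> p F G"
    unfolding cond_ent_def
    using sum.reindex_bij_betw[OF b, of "\<lambda>\<omega>. p \<omega> * log 2 (marg \<Omega> p (\<lambda>w. (F w, G w)) (F \<omega>, G \<omega>) / marg \<Omega> p G (G \<omega>))"]
    by simp
  finally show ?thesis .
qed

definition sw4 :: "nat \<times> nat \<times> 'x \<times> 'y \<Rightarrow> nat \<times> nat \<times> 'y \<times> 'x" where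
  "sw4 \<omega> = (case \<omega> of (a,b,x,y) \<Rightarrow> (b,a,y,x))"

lemma bij_sw4: "bij_betw (sw4 :: nat \<times> nat \<times> 'x::finite \<times> 'y::finite \<Rightarrow> _) (Omega TYPE('x) TYPE('y)) (Omega TYPE('y) TYPE('x))"
proof (rule bij_betw_byWitness[where f'=sw4])
  show "\<forall>a\<in>Omega TYPE('x) TYPE('y). sw4 (sw4 a) = a" by (auto simp: sw4_def)
  show "\<forall>a'\<in>Omega TYPE('y) TYPE('x). sw4 (sw4 a') = a'" by (auto simp: sw4_def)
  show "sw4 ` Omega TYPE('x) TYPE('y) \<subseteq> Omega TYPE('y) TYPE('x)"
    by (auto simp: sw4_def Omega_def aux_card_def mult.commute)
  show "sw4 ` Omega TYPE('y) TYPE('x) \<subseteq> Omega TYPE('x) TYPE('y)"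
    by (auto simp: sw4_def Omega_def aux_card_def mult.commute)
qed

lemma pmf_swap: "pmf (map_pmf prod.swap Q) (y,x) = pmf Q (x,y)"
  using pmf_map_inj'[of prod.swap Q "(x,y)"] by simp

lemma cond_ent_B:
  fixes Q :: "('x::finite \<times> 'y::finite) pmf" and \<iota> :: "'x \<Rightarrow> nat" and \<kappa> :: "'y \<Rightarrow> nat"
  assumes inj: "inj \<kappa>" and rng: "\<And>y. Suc (\<kappa> y) < aux_card TYPE('x) TYPE('y)"
    and l0: "0 \<le> m" and l1: "m \<le> 1"
    and bs: "\<And>x. (\<Sum>a\<in>{..<aux_card TYPE('x) TYPE('y)}. \<alpha> a x) = 1"
  shows "cond_ent (Omega TYPE('x) TYPE('y)) (prodp Q \<alpha> (alpha m \<kappa>)) (\<lambda>\<omega>. snd (XY \<omega>)) (\<lambda>\<omega>. (fst (snd \<omega>), fst (XY \<omega>)))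
     = (1 - m) * Hc (qQs Q)"
proof -
  let ?Q' = "map_pmf prod.swap Q"
  let ?p' = "prodp ?Q' (alpha m \<kappa>) \<alpha>"
  have pe: "prodp Q \<alpha> (alpha m \<kappa>) = (\<lambda>\<omega>. ?p' (sw4 \<omega>))"
  proof
    fix \<omega> :: "nat \<times> nat \<times> 'x \<times> 'y"
    obtain a b x y where w: "\<omega> = (a,b,x,y)" by (cases \<omega>) auto
    show "prodp Q \<alpha> (alpha m \<kappa>) \<omega> = ?p' (sw4 \<omega>)"
      by (simp add: w sw4_def prodp_def mem_Omega pmf_swap aux_card_def mult_ac)
  qed
  have e1: "(\<lambda>\<omega>::nat \<times> nat \<times> 'x \<times> 'y. snd (XY \<omega>)) = (\<lambda>\<omega>. fst (XY (sw4 \<omega>)))"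
    by (auto simp: XY_def sw4_def fun_eq_iff)
  have e2: "(\<lambda>\<omega>::nat \<times> nat \<times> 'x \<times> 'y. (fst (snd \<omega>), fst (XY \<omega>))) = (\<lambda>\<omega>. (\<lambda>w. (fst w, snd (XY w))) (sw4 \<omega>))"
    by (auto simp: XY_def sw4_def fun_eq_iff)
  have "cond_ent (Omega TYPE('x) TYPE('y)) (prodp Q \<alpha> (alpha m \<kappa>)) (\<lambda>\<omega>. snd (XY \<omega>)) (\<lambda>\<omega>. (fst (snd \<omega>), fst (XY \<omega>)))
     = cond_ent (Omega TYPE('y) TYPE('x)) ?p' (\<lambda>\<omega>. fst (XY \<omega>)) (\<lambda>w. (fst w, snd (XY w)))"
    unfolding pe e1 e2 by (rule cond_ent_reindex[OF bij_sw4])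
  also have "\<dots> = (1 - m) * Hc (qQ ?Q')"
  proof (rule cond_ent_A[OF inj _ l0 l1])
    show "\<And>y. Suc (\<kappa> y) < aux_card TYPE('y) TYPE('x)" using rng by (simp add: aux_card_def mult.commute)
    show "\<And>x. (\<Sum>b\<in>{..<aux_card TYPE('y) TYPE('x)}. \<alpha> b x) = 1" using bs by (simp add: aux_card_def mult.commute)
  qed
  also have "qQ ?Q' = qQs Q" by (auto simp: qQ_def qQs_def fun_eq_iff pmf_swap)
  finally show ?thesis .
qed



lemma lam_A: "(\<lambda>(a::nat, b::nat, x::'x, y::'y). a) = fst" by (auto simp: fun_eq_iff)
lemma lam_B: "(\<lambda>(a::nat, b::nat, x::'x, y::'y). b) = (\<lambda>\<omega>. fst (snd \<omega>))" by (auto simp: fun_eq_iff)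

lemma ex_inj_small: "\<exists>\<iota>::'x::finite \<Rightarrow> nat. inj \<iota> \<and> (\<forall>x. \<iota> x < CARD('x))"
proof -
  obtain f :: "'x \<Rightarrow> nat" and n where f: "f ` UNIV = {i. i < n}" "inj f"
    using finite_imp_inj_to_nat_seg[of "UNIV::'x set"] by auto
  have "card (f ` UNIV) = CARD('x)" using f(2) by (simp add: card_image)
  then have "n = CARD('x)" using f(1) by simp
  then have "\<forall>x. f x < CARD('x)" using f(1) by auto
  then show ?thesis using f(2) by blast
qed

lemma Poly_sub_Union:
  fixes Q :: "('x::finite \<times> 'y::finite) pmf"
  shows "Poly Q \<subseteq> (\<Union>p\<in>Pss Q. Rss p)"
proof
  fix R assume R: "R \<in> Poly Q"
  obtain R0 R1 R2 where RR: "R = (R0,R1,R2)" by (cases R) auto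
  have r: "0 \<le> R0" "0 \<le> R1" "0 \<le> R2" "Hc (qQ Q) \<le> R0 + R1" "Hc (qQs Q) \<le> R0 + R2"
    using R by (auto simp: RR Poly_def)
  obtain \<iota> :: "'x \<Rightarrow> nat" where \<iota>: "inj \<iota>" "\<And>x. \<iota> x < CARD('x)" using ex_inj_small by blast
  obtain \<kappa> :: "'y \<Rightarrow> nat" where \<kappa>: "inj \<kappa>" "\<And>y. \<kappa> y < CARD('y)" using ex_inj_small by blast
  let ?K = "aux_card TYPE('x) TYPE('y)"
  have r\<iota>: "Suc (\<iota> x) < ?K" for x using \<iota>(2)[of x] card_lt_aux[where 'x='x and 'y='y] by linarith
  have r\<kappa>: "Suc (\<kappa> y) < ?K" for y
    using \<kappa>(2)[of y] card_lt_aux[where 'x='y and 'y='x] by (simp add: aux_card_def mult.commute)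
  let ?\<Omega> = "Omega TYPE('x) TYPE('y)"
  have inPss: "prodp Q (alpha l \<iota>) (alpha m \<kappa>) \<in> Pss Q" if "0 \<le> l" "l \<le> 1" "0 \<le> m" "m \<le> 1" for l m
    by (rule prodp_Pss) (use that r\<iota> r\<kappa> in \<open>auto simp: alpha_nonneg sum_alpha\<close>)
  have Hx0: "0 \<le> Hc (qQ Q)"
  proof -
    have p: "prodp Q (alpha 0 \<iota>) (alpha 0 \<kappa>) \<in> Pss Q" by (rule inPss) auto
    have nn: "\<And>\<omega>. \<omega> \<in> ?\<Omega> \<Longrightarrow> 0 \<le> prodp Q (alpha 0 \<iota>) (alpha 0 \<kappa>) \<omega>" using Pss_nonneg[OF p] by blast
    have "0 \<le> cond_ent ?\<Omega> (prodp Q (alpha 0 \<iota>) (alpha 0 \<kappa>)) (\<lambda>\<omega>. fst (XY \<omega>)) (\<lambda>\<omega>. snd (XY \<omega>))"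
      by (rule cond_ent_nonneg) (use nn in auto)
    then show ?thesis unfolding cond_ent_X_Y[OF p] .
  qed
  have Hy0: "0 \<le> Hc (qQs Q)"
  proof -
    have p: "prodp Q (alpha 0 \<iota>) (alpha 0 \<kappa>) \<in> Pss Q" by (rule inPss) auto
    have nn: "\<And>\<omega>. \<omega> \<in> ?\<Omega> \<Longrightarrow> 0 \<le> prodp Q (alpha 0 \<iota>) (alpha 0 \<kappa>) \<omega>" using Pss_nonneg[OF p] by blast
    have "0 \<le> cond_ent ?\<Omega> (prodp Q (alpha 0 \<iota>) (alpha 0 \<kappa>)) (\<lambda>\<omega>. snd (XY \<omega>)) (\<lambda>\<omega>. fst (XY \<omega>))"
      by (rule cond_ent_nonneg) (use nn in auto)
    then show ?thesis unfolding cond_ent_Y_X[OF p] .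
  qed
  have choose: "\<exists>l. 0 \<le> l \<and> l \<le> 1 \<and> l * H \<le> R1' \<and> (1 - l) * H \<le> R0"
    if "0 \<le> H" "0 \<le> R1'" "H \<le> R0 + R1'" for H R1'
  proof (cases "H = 0")
    case True then show ?thesis using that r(1) by (intro exI[of _ 1]) auto
  next
    case False
    then have H: "0 < H" using that by simp
    show ?thesis
    proof (cases "R1' \<le> H")
      case True
      have "R1' / H * H = R1'" using H by simp
      moreover have "(1 - R1' / H) * H = H - R1'" using H by (simp add: algebra_simps)
      ultimately show ?thesis using True H that by (intro exI[of _ "R1' / H"]) (auto simp: divide_le_eq_1)
    next
      case False then show ?thesis using that r(1) H by (intro exI[of _ 1]) auto
    qed
  qed
  obtain l where l: "0 \<le> l" "l \<le> 1" "l * Hc (qQ Q) \<le> R1" "(1 - l) * Hc (qQ Q) \<le> R0"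
    using choose[OF Hx0 r(2) r(4)] by blast
  obtain m where m: "0 \<le> m" "m \<le> 1" "m * Hc (qQs Q) \<le> R2" "(1 - m) * Hc (qQs Q) \<le> R0"
    using choose[OF Hy0 r(3) r(5)] by blast
  define p where "p = prodp Q (alpha l \<iota>) (alpha m \<kappa>)"
  have p: "p \<in> Pss Q" unfolding p_def by (rule inPss) (use l m in auto)
  have eA: "cond_ent ?\<Omega> p (\<lambda>\<omega>. fst (XY \<omega>)) (\<lambda>\<omega>. (fst \<omega>, snd (XY \<omega>))) = (1 - l) * Hc (qQ Q)"
    unfolding p_def by (rule cond_ent_A[OF \<iota>(1) r\<iota> l(1,2)]) (use r\<kappa> m in \<open>auto simp: sum_alpha\<close>)
  have eB: "cond_ent ?\<Omega> p (\<lambda>\<omega>. snd (XY \<omega>)) (\<lambda>\<omega>. (fst (snd \<omega>), fst (XY \<omega>))) = (1 - m) * Hc (qQs Q)"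
    unfolding p_def by (rule cond_ent_B[OF \<kappa>(1) r\<kappa> m(1,2)]) (use r\<iota> l in \<open>auto simp: sum_alpha\<close>)
  have "R \<in> Rss p"
    unfolding RR Rss_def Let_def lam_X lam_Y lam_A lam_B
    using eA eB cond_ent_X_Y[OF p] cond_ent_Y_X[OF p] l m
    by (simp add: cond_mi_def algebra_simps)
  then show "R \<in> (\<Union>p\<in>Pss Q. Rss p)" using p by blast
qed

lemma Union_eq_Poly: "(\<Union>p\<in>Pss Q. Rss p) = Poly Q"
  using Poly_sub_Union[of Q] Rss_sub_Poly[of _ Q] by blast

lemma closed_Poly: "closed (Poly Q)"
proof -
  have "Poly Q = {R. 0 \<le> fst R} \<inter> {R. 0 \<le> fst (snd R)} \<inter> {R. 0 \<le> snd (snd R)} \<inter>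
      {R. Hc (qQ Q) \<le> fst R + fst (snd R)} \<inter> {R. Hc (qQs Q) \<le> fst R + snd (snd R)}"
    by (auto simp: Poly_def)
  also have "closed \<dots>"
    by (intro closed_Int closed_Collect_le continuous_intros)
  finally show ?thesis .
qed



lemma blockprob_bp: "length xs = length ys \<Longrightarrow> blockprob Q xs ys = bp (qQ Q) xs ys"
proof (induction xs arbitrary: ys)
  case Nil then show ?case by (simp add: blockprob_def)
next
  case (Cons x xs)
  then obtain y ys' where y: "ys = y#ys'" "length xs = length ys'" by (cases ys) auto
  have "blockprob Q (x#xs) ys = pmf Q (x,y) * blockprob Q xs ys'"
    unfolding blockprob_def y using y(2) by (simp add: prod.lessThan_Suc_shift del: prod.lessThan_Suc)
  then show ?case using Cons.IH[OF y(2)] y by (simp add: qQ_def)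
qed

lemma bp_swap: "length xs = length ys \<Longrightarrow> bp (qQs Q) ys xs = bp (qQ Q) xs ys"
proof (induction xs arbitrary: ys)
  case Nil then show ?case by simp
next
  case (Cons x xs)
  then obtain y ys' where y: "ys = y#ys'" "length xs = length ys'" by (cases ys) auto
  show ?case using Cons.IH[OF y(2)] y by (simp add: qQ_def qQs_def)
qed

lemma sum_blocks_swap:
  fixes f :: "'a list \<Rightarrow> 'b list \<Rightarrow> 'c::comm_monoid_add"
  shows "(\<Sum>(xs,ys)\<in>blocks n. f xs ys) = (\<Sum>(ys,xs)\<in>blocks n. f xs ys)"
proof -
  have "bij_betw prod.swap (blocks n :: ('b list \<times> 'a list) set) (blocks n)"
    by (rule bij_betw_byWitness[where f'=prod.swap]) (auto simp: blocks_def)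
  from sum.reindex_bij_betw[OF this, of "\<lambda>(xs,ys). f xs ys"] show ?thesis by (simp add: case_prod_unfold)
qed

lemma qQ_nonneg: "0 \<le> qQ Q x y" by (simp add: qQ_def)
lemma qQs_nonneg: "0 \<le> qQs Q y x" by (simp add: qQs_def)

lemma qQ_sum: "(\<Sum>(x,y)\<in>UNIV. qQ (Q :: ('x::finite \<times> 'y::finite) pmf) x y) = 1"
  using sum_pmf_eq_1[of "UNIV :: ('x \<times> 'y) set" Q] by (simp add: qQ_def case_prod_unfold)

lemma qQs_sum: "(\<Sum>(y,x)\<in>UNIV. qQs (Q :: ('x::finite \<times> 'y::finite) pmf) y x) = 1"
proof -
  have b: "bij_betw prod.swap (UNIV :: ('y \<times> 'x) set) UNIV"
    by (rule bij_betw_byWitness[where f'=prod.swap]) auto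
  have e: "(\<lambda>(y,x). qQs Q y x) = (\<lambda>z. pmf Q (prod.swap z))" by (auto simp: qQs_def fun_eq_iff)
  from sum.reindex_bij_betw[OF b, of "pmf Q"] show ?thesis
    using sum_pmf_eq_1[of "UNIV :: ('x \<times> 'y) set" Q] unfolding e by simp
qed

lemma mod_recover:
  fixes u1 u2 m :: nat
  assumes "u1 < m" "u2 < m"
  shows "((u1 + u2) mod m + m - u2) mod m = u1"
proof (cases "u1 + u2 < m")
  case True
  then have "(u1 + u2) mod m + m - u2 = u1 + m" by simp
  then show ?thesis using assms by simp
next
  case False
  then have "(u1 + u2) mod m = u1 + u2 - m" using assms by (simp add: le_mod_geq)
  then have "(u1 + u2) mod m + m - u2 = u1" using False by simp
  then show ?thesis using assms by simp
qed

lemma ev_over_n: "0 < e \<Longrightarrow> eventually (\<lambda>n. c / real n \<le> e) sequentially"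
  using order_tendstoD(2)[OF lim_const_over_n[of c] , of e]
  by (auto elim: eventually_mono)

lemma powr_bound: "0 < t \<Longrightarrow> 2 powr (- t) \<le> 1 / (t * ln 2)" for t :: real
proof -
  assume t: "0 < t"
  have "1 + t * ln 2 \<le> exp (t * ln 2)" by (rule exp_ge_add_one_self)
  also have "exp (t * ln 2) = 2 powr t" by (simp add: powr_def mult.commute)
  finally have a: "t * ln 2 \<le> 2 powr t" by simp
  have "0 < t * ln 2" using t by simp
  then have "1 / 2 powr t \<le> 1 / (t * ln 2)" using a by (intro divide_left_mono) auto
  then show ?thesis by (simp add: powr_minus divide_inverse)
qed



lemma Hc_nonneg:
  fixes q :: "'a::finite \<Rightarrow> 'b::finite \<Rightarrow> real"
  assumes nn: "\<And>x y. 0 \<le> q x y"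
  shows "0 \<le> Hc q"
proof -
  have "q x y * log 2 (q x y / qY q y) \<le> 0" for x y
  proof (cases "q x y = 0")
    case False
    then have p: "0 < q x y" using nn[of x y] by simp
    have le: "q x y \<le> qY q y" by (rule qY_ge) (rule nn)
    then have "log 2 (q x y / qY q y) \<le> 0" using p by (simp add: divide_le_eq_1)
    then show ?thesis using p by (simp add: mult_nonneg_nonpos)
  qed simp
  then show ?thesis unfolding Hc_def by (simp add: sum_nonpos case_prod_unfold)
qed

lemma rate_bound:
  assumes n: "0 < n" and m: "1 \<le> m" and mb: "real m \<le> 2 powr (c + real n * r)"
  shows "log 2 (real m) / real n \<le> r + c / real n"
proof -
  have "log 2 (real m) \<le> log 2 (2 powr (c + real n * r))"
    by (rule iffD2[OF log_le_cancel_iff]) (use m mb in auto)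
  also have "\<dots> = c + real n * r" by simp
  finally have "log 2 (real m) \<le> c + real n * r" .
  then have "log 2 (real m) / real n \<le> (c + real n * r) / real n" using n by (simp add: divide_right_mono)
  also have "\<dots> = r + c / real n" using n by (simp add: field_simps)
  finally show ?thesis .
qed

lemma ceil_bounds:
  fixes P :: real assumes "1 \<le> P"
  shows "P \<le> real (nat \<lceil>P\<rceil>)" "real (nat \<lceil>P\<rceil>) \<le> 2 * P" "1 \<le> nat \<lceil>P\<rceil>"
proof -
  have c1: "P \<le> of_int \<lceil>P\<rceil>" by (rule le_of_int_ceiling)
  have c2: "of_int \<lceil>P\<rceil> < P + 1" using ceiling_correct[of P] by linarith
  have pos: "0 \<le> \<lceil>P\<rceil>" using assms by linarith
  show "P \<le> real (nat \<lceil>P\<rceil>)" using c1 pos by simp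
  show "real (nat \<lceil>P\<rceil>) \<le> 2 * P" using c1 c2 pos assms by (simp add: of_nat_nat)
  show "1 \<le> nat \<lceil>P\<rceil>" using assms by linarith
qed



lemma code_eps:
  fixes q :: "'a::finite \<Rightarrow> 'b::finite \<Rightarrow> real"
  assumes nn: "\<And>x y. 0 \<le> q x y" and s1: "(\<Sum>(x,y)\<in>UNIV. q x y) = 1"
    and d: "0 < \<delta>" and n: "1 \<le> n"
    and C2: "Vq q / \<delta>^2 / real n \<le> \<epsilon> / 2" and C4: "1 / (\<delta> * ln 2) / real n \<le> \<epsilon> / 2"
  shows "\<exists>(c::'a list \<Rightarrow> nat) (dd::nat \<Rightarrow> 'b list \<Rightarrow> 'a list).
    (\<forall>xs. length xs = n \<longrightarrow> c xs < nat \<lceil>2 powr (real n * (Hc q + 2 * \<delta>))\<rceil>) \<and>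
    (\<Sum>(xs,ys)\<in>blocks n. bp q xs ys * (if dd (c xs) ys \<noteq> xs then 1 else 0)) \<le> \<epsilon>"
proof -
  define P where "P = 2 powr (real n * (Hc q + 2 * \<delta>))"
  have H: "0 \<le> Hc q" by (rule Hc_nonneg) (rule nn)
  have P1: "1 \<le> P" unfolding P_def using H d by (intro ge_one_powr_ge_zero) auto
  define K where "K = nat \<lceil>P\<rceil>"
  have K: "P \<le> real K" "1 \<le> K" using ceil_bounds[OF P1] by (simp_all add: K_def)
  have t: "0 < real n * \<delta>" using d n by simp
  obtain c dd where c: "\<forall>xs. length xs = n \<longrightarrow> c xs < K"
    and b: "(\<Sum>(xs,ys)\<in>blocks n. bp q xs ys * (if dd (c xs) ys \<noteq> xs then 1 else 0))
      \<le> real n * Vq q / (real n * \<delta>)^2 + 2 powr (real n * (Hc q + \<delta>)) / real K"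
    using code_exists[OF nn s1 _ t, of K] K by auto
  have e1: "real n * Vq q / (real n * \<delta>)^2 = Vq q / \<delta>^2 / real n" using n by (simp add: power2_eq_square field_simps)
  have "2 powr (real n * (Hc q + \<delta>)) / real K \<le> 2 powr (real n * (Hc q + \<delta>)) / P"
    using K P1 by (intro divide_left_mono) auto
  also have "\<dots> = 2 powr (- (real n * \<delta>))" unfolding P_def
    by (simp add: powr_diff[symmetric] algebra_simps)
  also have "\<dots> \<le> 1 / (real n * \<delta> * ln 2)" by (rule powr_bound[OF t])
  also have "\<dots> = 1 / (\<delta> * ln 2) / real n" by (simp add: field_simps)
  finally have e2: "2 powr (real n * (Hc q + \<delta>)) / real K \<le> \<epsilon> / 2" using C4 by linarith
  have "(\<Sum>(xs,ys)\<in>blocks n. bp q xs ys * (if dd (c xs) ys \<noteq> xs then 1 else 0)) \<le> \<epsilon>"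
    using b e1 e2 C2 by linarith
  then show ?thesis using c unfolding K_def P_def by blast
qed



lemma m1_bound:
  assumes "1 \<le> P0" "P0 \<le> real m0" "real Kx \<le> 2 * Px" "Px / P0 \<le> W" "1 \<le> W" "0 < m0" "0 \<le> Px"
  shows "real (Kx div m0 + 1) \<le> 4 * W"
proof -
  have "real (Kx div m0) \<le> real Kx / real m0" by (rule of_nat_div_le_of_nat)
  also have "\<dots> \<le> 2 * Px / real m0" using assms by (simp add: divide_right_mono)
  also have "\<dots> \<le> 2 * Px / P0" using assms by (intro divide_left_mono) auto
  also have "\<dots> \<le> 2 * W" using assms by simp
  finally show ?thesis using assms by simp
qed

lemma four_powr: "4 * 2 powr (x::real) = 2 powr (2 + x)"
  by (simp add: powr_add)

lemma achieve_n:
  fixes Q :: "('x::finite \<times> 'y::finite) pmf"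
  assumes R: "(R0,R1,R2) \<in> Poly Q" and \<epsilon>: "0 < \<epsilon>" and n: "1 \<le> n"
   and C1: "4 / real n \<le> \<epsilon>"
   and C2: "Vq (qQ Q) / (\<epsilon>/4)^2 / real n \<le> \<epsilon>/2" and C3: "Vq (qQs Q) / (\<epsilon>/4)^2 / real n \<le> \<epsilon>/2"
   and C4: "1 / ((\<epsilon>/4) * ln 2) / real n \<le> \<epsilon>/2"
  shows "\<exists>(m0::nat) (m1::nat) (m2::nat) (e :: 'x list \<Rightarrow> 'y list \<Rightarrow> nat \<times> nat \<times> nat)
        (dx :: nat \<Rightarrow> nat \<Rightarrow> 'y list \<Rightarrow> 'x list) (dy :: nat \<Rightarrow> nat \<Rightarrow> 'x list \<Rightarrow> 'y list).
          0 < m0 \<and> 0 < m1 \<and> 0 < m2 \<and>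
          (\<forall>(xs, ys)\<in>blocks n. e xs ys \<in> {1..m0} \<times> {1..m1} \<times> {1..m2}) \<and>
          max (err_x Q n e dx) (err_y Q n e dy) \<le> \<epsilon> \<and>
          log 2 (real m0) / real n \<le> R0 + \<epsilon> \<and>
          log 2 (real m1) / real n \<le> R1 + \<epsilon> \<and>
          log 2 (real m2) / real n \<le> R2 + \<epsilon>"
proof -
  define \<delta> where "\<delta> = \<epsilon> / 4"
  have d: "0 < \<delta>" using \<epsilon> by (simp add: \<delta>_def)
  have r: "0 \<le> R0" "0 \<le> R1" "0 \<le> R2" "Hc (qQ Q) \<le> R0 + R1" "Hc (qQs Q) \<le> R0 + R2"
    using R by (auto simp: Poly_def)
  obtain cX dX where cX: "\<forall>xs. length xs = n \<longrightarrow> cX xs < nat \<lceil>2 powr (real n * (Hc (qQ Q) + 2 * \<delta>))\<rceil>"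
    and eX: "(\<Sum>(xs,ys)\<in>blocks n. bp (qQ Q) xs ys * (if dX (cX xs) ys \<noteq> xs then 1 else 0)) \<le> \<epsilon>"
    using code_eps[of "qQ Q", OF qQ_nonneg qQ_sum d n, of \<epsilon>] C2 C4 unfolding \<delta>_def by blast
  obtain cY dY where cY: "\<forall>ys. length ys = n \<longrightarrow> cY ys < nat \<lceil>2 powr (real n * (Hc (qQs Q) + 2 * \<delta>))\<rceil>"
    and eY: "(\<Sum>(ys,xs)\<in>blocks n. bp (qQs Q) ys xs * (if dY (cY ys) xs \<noteq> ys then 1 else 0)) \<le> \<epsilon>"
    using code_eps[of "qQs Q", OF qQs_nonneg qQs_sum d n, of \<epsilon>] C3 C4 unfolding \<delta>_def by blast
  define Px where "Px = 2 powr (real n * (Hc (qQ Q) + 2 * \<delta>))"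
  define Py where "Py = 2 powr (real n * (Hc (qQs Q) + 2 * \<delta>))"
  define P0 where "P0 = 2 powr (real n * R0)"
  define Kx where "Kx = nat \<lceil>Px\<rceil>"
  define Ky where "Ky = nat \<lceil>Py\<rceil>"
  define m0 where "m0 = nat \<lceil>P0\<rceil>"
  define m1 where "m1 = Kx div m0 + 1"
  define m2 where "m2 = Ky div m0 + 1"
  have Hx: "0 \<le> Hc (qQ Q)" by (rule Hc_nonneg) (rule qQ_nonneg)
  have Hy: "0 \<le> Hc (qQs Q)" by (rule Hc_nonneg) (rule qQs_nonneg)
  have Px1: "1 \<le> Px" unfolding Px_def using Hx d by (intro ge_one_powr_ge_zero) auto
  have Py1: "1 \<le> Py" unfolding Py_def using Hy d by (intro ge_one_powr_ge_zero) auto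
  have P01: "1 \<le> P0" unfolding P0_def using r by (intro ge_one_powr_ge_zero) auto
  note bx = ceil_bounds[OF Px1, folded Kx_def]
  note by' = ceil_bounds[OF Py1, folded Ky_def]
  note b0 = ceil_bounds[OF P01, folded m0_def]
  have m0: "0 < m0" using b0 by simp
  define e where "e xs ys = ((cX xs mod m0 + cY ys mod m0) mod m0 + 1, cX xs div m0 + 1, cY ys div m0 + 1)"
    for xs :: "'x list" and ys :: "'y list"
  define dx where "dx k0 k1 ys = dX ((k0 - 1 + m0 - cY ys mod m0) mod m0 + m0 * (k1 - 1)) ys"
    for k0 k1 :: nat and ys :: "'y list"
  define dy where "dy k0 k2 xs = dY ((k0 - 1 + m0 - cX xs mod m0) mod m0 + m0 * (k2 - 1)) xs"
    for k0 k2 :: nat and xs :: "'x list"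
  have ex: "dx (fst (e xs ys)) (fst (snd (e xs ys))) ys = dX (cX xs) ys" for xs ys
  proof -
    have "((cX xs mod m0 + cY ys mod m0) mod m0 + m0 - cY ys mod m0) mod m0 = cX xs mod m0"
      by (rule mod_recover) (use m0 in auto)
    then show ?thesis by (simp add: dx_def e_def mod_mult_div_eq)
  qed
  have ey: "dy (fst (e xs ys)) (snd (snd (e xs ys))) xs = dY (cY ys) xs" for xs ys
  proof -
    have "((cY ys mod m0 + cX xs mod m0) mod m0 + m0 - cX xs mod m0) mod m0 = cY ys mod m0"
      by (rule mod_recover) (use m0 in auto)
    then show ?thesis by (simp add: dy_def e_def mod_mult_div_eq add.commute)
  qed
  have range: "\<forall>(xs, ys)\<in>blocks n. e xs ys \<in> {1..m0} \<times> {1..m1} \<times> {1..m2}"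
  proof (clarify)
    fix xs ys assume "(xs, ys) \<in> (blocks n :: ('x list \<times> 'y list) set)"
    then have L: "length xs = n" "length ys = n" by (auto simp: blocks_def)
    have "cX xs < Kx" using cX L by (simp add: Kx_def Px_def)
    then have "cX xs div m0 \<le> Kx div m0" by (simp add: div_le_mono)
    moreover have "cY ys < Ky" using cY L by (simp add: Ky_def Py_def)
    then have "cY ys div m0 \<le> Ky div m0" by (simp add: div_le_mono)
    moreover have "(cX xs mod m0 + cY ys mod m0) mod m0 < m0" using m0 by simp
    ultimately show "e xs ys \<in> {1..m0} \<times> {1..m1} \<times> {1..m2}"
      by (simp add: e_def m1_def m2_def)
  qed
  have errx: "err_x Q n e dx \<le> \<epsilon>"
  proof -
    have "err_x Q n e dx = (\<Sum>(xs,ys)\<in>blocks n. bp (qQ Q) xs ys * (if dX (cX xs) ys \<noteq> xs then 1 else 0))"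
      unfolding err_x_def
    proof (rule sum.cong[OF refl], clarify)
      fix xs ys assume "(xs, ys) \<in> (blocks n :: ('x list \<times> 'y list) set)"
      then have L: "length xs = length ys" by (auto simp: blocks_def)
      show "(case e xs ys of (m0, m1, m2) \<Rightarrow> if dx m0 m1 ys \<noteq> xs then blockprob Q xs ys else 0) =
          bp (qQ Q) xs ys * (if dX (cX xs) ys \<noteq> xs then 1 else 0)"
        using ex[of xs ys] blockprob_bp[OF L, of Q] by (simp add: case_prod_unfold)
    qed
    then show ?thesis using eX by simp
  qed
  have erry: "err_y Q n e dy \<le> \<epsilon>"
  proof -
    have "err_y Q n e dy = (\<Sum>(xs,ys)\<in>blocks n. bp (qQs Q) ys xs * (if dY (cY ys) xs \<noteq> ys then 1 else 0))"
      unfolding err_y_def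
    proof (rule sum.cong[OF refl], clarify)
      fix xs ys assume "(xs, ys) \<in> (blocks n :: ('x list \<times> 'y list) set)"
      then have L: "length xs = length ys" by (auto simp: blocks_def)
      show "(case e xs ys of (m0, m1, m2) \<Rightarrow> if dy m0 m2 xs \<noteq> ys then blockprob Q xs ys else 0) =
          bp (qQs Q) ys xs * (if dY (cY ys) xs \<noteq> ys then 1 else 0)"
        using ey[of xs ys] blockprob_bp[OF L, of Q] bp_swap[OF L, of Q] by (simp add: case_prod_unfold)
    qed
    also have "\<dots> = (\<Sum>(ys,xs)\<in>blocks n. bp (qQs Q) ys xs * (if dY (cY ys) xs \<noteq> ys then 1 else 0))"
      by (rule sum_blocks_swap)
    finally show ?thesis using eY by simp
  qed
  have nn: "0 < real n" using n by simp
  have inv_n: "1 / real n \<le> \<epsilon> / 4" "2 / real n \<le> \<epsilon> / 2" using C1 nn by (simp_all add: field_simps)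
  have rate0: "log 2 (real m0) / real n \<le> R0 + \<epsilon>"
  proof -
    have "real m0 \<le> 2 powr (1 + real n * R0)" using b0(2) by (simp add: P0_def powr_add)
    from rate_bound[OF _ b0(3) this] nn have "log 2 (real m0) / real n \<le> R0 + 1 / real n" by simp
    then show ?thesis using inv_n \<epsilon> by linarith
  qed
  have rate1: "log 2 (real m1) / real n \<le> R1 + \<epsilon>"
  proof -
    define W where "W = 2 powr (real n * (R1 + 2 * \<delta>))"
    have W1: "1 \<le> W" unfolding W_def using r d by (intro ge_one_powr_ge_zero) auto
    have "Px / P0 = 2 powr (real n * (Hc (qQ Q) + 2 * \<delta>) - real n * R0)"
      by (simp add: Px_def P0_def powr_diff)
    also have "\<dots> \<le> W" unfolding W_def
    proof (intro powr_mono)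
      have "real n * (Hc (qQ Q) + 2 * \<delta>) - real n * R0 = real n * (Hc (qQ Q) + 2 * \<delta> - R0)" by (simp add: algebra_simps)
      also have "\<dots> \<le> real n * (R1 + 2 * \<delta>)" using r(4) nn by (intro mult_left_mono) auto
      finally show "real n * (Hc (qQ Q) + 2 * \<delta>) - real n * R0 \<le> real n * (R1 + 2 * \<delta>)" .
    qed simp
    finally have "Px / P0 \<le> W" .
    then have "real m1 \<le> 4 * W" unfolding m1_def
      by (intro m1_bound[OF P01 b0(1) bx(2) _ W1 m0]) (use Px1 in auto)
    also have "\<dots> = 2 powr (2 + real n * (R1 + 2 * \<delta>))" by (simp add: W_def four_powr)
    finally have "real m1 \<le> 2 powr (2 + real n * (R1 + 2 * \<delta>))" .
    from rate_bound[OF _ _ this] nn have "log 2 (real m1) / real n \<le> R1 + 2 * \<delta> + 2 / real n"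
      by (simp add: m1_def)
    then show ?thesis using inv_n \<epsilon> by (simp add: \<delta>_def)
  qed
  have rate2: "log 2 (real m2) / real n \<le> R2 + \<epsilon>"
  proof -
    define W where "W = 2 powr (real n * (R2 + 2 * \<delta>))"
    have W1: "1 \<le> W" unfolding W_def using r d by (intro ge_one_powr_ge_zero) auto
    have "Py / P0 = 2 powr (real n * (Hc (qQs Q) + 2 * \<delta>) - real n * R0)"
      by (simp add: Py_def P0_def powr_diff)
    also have "\<dots> \<le> W" unfolding W_def
    proof (intro powr_mono)
      have "real n * (Hc (qQs Q) + 2 * \<delta>) - real n * R0 = real n * (Hc (qQs Q) + 2 * \<delta> - R0)" by (simp add: algebra_simps)
      also have "\<dots> \<le> real n * (R2 + 2 * \<delta>)" using r(5) nn by (intro mult_left_mono) auto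
      finally show "real n * (Hc (qQs Q) + 2 * \<delta>) - real n * R0 \<le> real n * (R2 + 2 * \<delta>)" .
    qed simp
    finally have "Py / P0 \<le> W" .
    then have "real m2 \<le> 4 * W" unfolding m2_def
      by (intro m1_bound[OF P01 b0(1) by'(2) _ W1 m0]) (use Py1 in auto)
    also have "\<dots> = 2 powr (2 + real n * (R2 + 2 * \<delta>))" by (simp add: W_def four_powr)
    finally have "real m2 \<le> 2 powr (2 + real n * (R2 + 2 * \<delta>))" .
    from rate_bound[OF _ _ this] nn have "log 2 (real m2) / real n \<le> R2 + 2 * \<delta> + 2 / real n"
      by (simp add: m2_def)
    then show ?thesis using inv_n \<epsilon> by (simp add: \<delta>_def)
  qed
  show ?thesis
    apply (rule exI[of _ m0], rule exI[of _ m1], rule exI[of _ m2], rule exI[of _ e], rule exI[of _ dx], rule exI[of _ dy])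
    using m0 range errx erry rate0 rate1 rate2 by (simp add: m1_def m2_def)
qed



lemma Poly_achievable:
  fixes Q :: "('x::finite \<times> 'y::finite) pmf"
  assumes R: "R \<in> Poly Q"
  shows "achievable Q R"
proof -
  obtain R0 R1 R2 where RR: "R = (R0,R1,R2)" by (cases R) auto
  show ?thesis unfolding achievable_def RR
  proof (simp only: prod.case, intro allI impI)
    fix \<epsilon> :: real assume \<epsilon>: "0 < \<epsilon>"
    have ev: "eventually (\<lambda>n. 1 \<le> n \<and> 4 / real n \<le> \<epsilon> \<and>
        Vq (qQ Q) / (\<epsilon>/4)^2 / real n \<le> \<epsilon>/2 \<and> Vq (qQs Q) / (\<epsilon>/4)^2 / real n \<le> \<epsilon>/2 \<and>
        1 / ((\<epsilon>/4) * ln 2) / real n \<le> \<epsilon>/2) sequentially"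
      using \<epsilon> by (intro eventually_conj ev_over_n) (auto simp: eventually_sequentially)
    then obtain N where N: "\<And>n. n \<ge> N \<Longrightarrow> 1 \<le> n \<and> 4 / real n \<le> \<epsilon> \<and>
        Vq (qQ Q) / (\<epsilon>/4)^2 / real n \<le> \<epsilon>/2 \<and> Vq (qQs Q) / (\<epsilon>/4)^2 / real n \<le> \<epsilon>/2 \<and>
        1 / ((\<epsilon>/4) * ln 2) / real n \<le> \<epsilon>/2"
      unfolding eventually_sequentially by blast
    show "\<exists>N. \<forall>n\<ge>N. \<exists>(m0::nat) (m1::nat) (m2::nat) (e :: 'x list \<Rightarrow> 'y list \<Rightarrow> nat \<times> nat \<times> nat)
        (dx :: nat \<Rightarrow> nat \<Rightarrow> 'y list \<Rightarrow> 'x list) (dy :: nat \<Rightarrow> nat \<Rightarrow> 'x list \<Rightarrow> 'y list).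
          0 < m0 \<and> 0 < m1 \<and> 0 < m2 \<and>
          (\<forall>(xs, ys)\<in>blocks n. e xs ys \<in> {1..m0} \<times> {1..m1} \<times> {1..m2}) \<and>
          max (err_x Q n e dx) (err_y Q n e dy) \<le> \<epsilon> \<and>
          log 2 (real m0) / real n \<le> R0 + \<epsilon> \<and>
          log 2 (real m1) / real n \<le> R1 + \<epsilon> \<and>
          log 2 (real m2) / real n \<le> R2 + \<epsilon>"
    proof (rule exI[of _ N], intro allI impI)
      fix n assume "N \<le> n"
      then have c: "1 \<le> n" "4 / real n \<le> \<epsilon>" "Vq (qQ Q) / (\<epsilon>/4)^2 / real n \<le> \<epsilon>/2"
        "Vq (qQs Q) / (\<epsilon>/4)^2 / real n \<le> \<epsilon>/2" "1 / ((\<epsilon>/4) * ln 2) / real n \<le> \<epsilon>/2"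
        using N by auto
      show "\<exists>(m0::nat) (m1::nat) (m2::nat) (e :: 'x list \<Rightarrow> 'y list \<Rightarrow> nat \<times> nat \<times> nat)
        (dx :: nat \<Rightarrow> nat \<Rightarrow> 'y list \<Rightarrow> 'x list) (dy :: nat \<Rightarrow> nat \<Rightarrow> 'x list \<Rightarrow> 'y list).
          0 < m0 \<and> 0 < m1 \<and> 0 < m2 \<and>
          (\<forall>(xs, ys)\<in>blocks n. e xs ys \<in> {1..m0} \<times> {1..m1} \<times> {1..m2}) \<and>
          max (err_x Q n e dx) (err_y Q n e dy) \<le> \<epsilon> \<and>
          log 2 (real m0) / real n \<le> R0 + \<epsilon> \<and>
          log 2 (real m1) / real n \<le> R1 + \<epsilon> \<and>
          log 2 (real m2) / real n \<le> R2 + \<epsilon>"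
        by (rule achieve_n[OF R[unfolded RR] \<epsilon> c])
    qed
  qed
qed



lemma conv_core:
  fixes q :: "'a::finite \<Rightarrow> 'b::finite \<Rightarrow> real"
  assumes nn: "\<And>x y. 0 \<le> q x y" and s1: "(\<Sum>(x,y)\<in>UNIV. q x y) = 1" and \<gamma>: "0 < \<gamma>"
    and H: "\<And>N. \<exists>n\<ge>N. 1 \<le> n \<and> (\<exists>(m0::nat) (m1::nat) (ek::'a list \<Rightarrow> 'b list \<Rightarrow> nat \<times> nat) (dk::nat \<times> nat \<Rightarrow> 'b list \<Rightarrow> 'a list).
        (\<forall>(xs,ys)\<in>blocks n. ek xs ys \<in> {1..m0} \<times> {1..m1}) \<and>
        (\<Sum>(xs,ys)\<in>blocks n. bp q xs ys * (if dk (ek xs ys) ys \<noteq> xs then 1 else 0)) \<le> 1/4 \<and>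
        real m0 * real m1 \<le> 2 powr (real n * (Hc q - \<gamma>/2)))"
  shows False
proof -
  define \<delta> where "\<delta> = \<gamma> / 4"
  have d: "0 < \<delta>" using \<gamma> by (simp add: \<delta>_def)
  have ev: "eventually (\<lambda>n. Vq q / \<delta>^2 / real n \<le> 1/8 \<and> 1 / (\<delta> * ln 2) / real n \<le> 1/8) sequentially"
    by (intro eventually_conj ev_over_n) auto
  then obtain N where N: "\<And>n. n \<ge> N \<Longrightarrow> Vq q / \<delta>^2 / real n \<le> 1/8 \<and> 1 / (\<delta> * ln 2) / real n \<le> 1/8"
    unfolding eventually_sequentially by blast
  obtain n m0 m1 ek dk where n: "n \<ge> N" "1 \<le> n"
    and ek: "\<forall>(xs,ys)\<in>blocks n. ek xs ys \<in> {1..m0} \<times> {1..m1}"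
    and err: "(\<Sum>(xs,ys)\<in>blocks n. bp q xs ys * (if dk (ek xs ys) ys \<noteq> xs then 1 else 0)) \<le> 1/4"
    and mm: "real m0 * real m1 \<le> 2 powr (real n * (Hc q - \<gamma>/2))"
    using H[of N] by blast
  have c: "Vq q / \<delta>^2 / real n \<le> 1/8" "1 / (\<delta> * ln 2) / real n \<le> 1/8" using N n by auto
  have t: "0 < real n * \<delta>" using n d by simp
  let ?M = "{1..m0} \<times> {1..m1}"
  have cb: "(\<Sum>(xs,ys)\<in>blocks n. bp q xs ys * (if dk (ek xs ys) ys = xs then 1 else 0))
     \<le> real n * Vq q / (real n * \<delta>)^2 + real (card ?M) * 2 powr (-(real n * (Hc q - \<delta>)))"
    by (rule converse_bound[OF nn s1 t]) (use ek in auto)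
  have "(\<Sum>(xs,ys)\<in>blocks n. bp q xs ys * (if dk (ek xs ys) ys = xs then 1 else 0))
      + (\<Sum>(xs,ys)\<in>blocks n. bp q xs ys * (if dk (ek xs ys) ys \<noteq> xs then 1 else 0))
      = (\<Sum>(xs,ys)\<in>blocks n. bp q xs ys)"
    by (subst sum.distrib[symmetric]) (rule sum.cong, auto)
  then have good: "3/4 \<le> (\<Sum>(xs,ys)\<in>blocks n. bp q xs ys * (if dk (ek xs ys) ys = xs then 1 else 0))"
    using sum_bp[OF s1, of n] err by linarith
  have e1: "real n * Vq q / (real n * \<delta>)^2 = Vq q / \<delta>^2 / real n" using n by (simp add: power2_eq_square field_simps)
  have "real (card ?M) * 2 powr (-(real n * (Hc q - \<delta>))) \<le> 2 powr (real n * (Hc q - \<gamma>/2)) * 2 powr (-(real n * (Hc q - \<delta>)))"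
    using mm by (intro mult_right_mono) auto
  also have "\<dots> = 2 powr (- (real n * \<delta>))"
    by (simp add: powr_add[symmetric] \<delta>_def algebra_simps)
  also have "\<dots> \<le> 1 / (real n * \<delta> * ln 2)" by (rule powr_bound[OF t])
  also have "\<dots> = 1 / (\<delta> * ln 2) / real n" by (simp add: field_simps)
  finally have e2: "real (card ?M) * 2 powr (-(real n * (Hc q - \<delta>))) \<le> 1/8" using c by linarith
  show False using good cb e1 e2 c by linarith
qed

lemma rate_inv:
  assumes n: "0 < real n" and m: "0 < m" and r: "log 2 (real m) / real n \<le> r"
  shows "real m \<le> 2 powr (real n * r)"
proof -
  have "log 2 (real m) \<le> real n * r" using r n by (simp add: divide_le_eq mult.commute)
  then have "2 powr (log 2 (real m)) \<le> 2 powr (real n * r)" by simp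
  then show ?thesis using m by simp
qed

lemma achievable_Poly:
  fixes Q :: "('x::finite \<times> 'y::finite) pmf"
  assumes A: "achievable Q R"
  shows "R \<in> Poly Q"
proof -
  obtain R0 R1 R2 where RR: "R = (R0,R1,R2)" by (cases R) auto
  have A': "\<And>\<epsilon>. 0 < \<epsilon> \<Longrightarrow> \<exists>N. \<forall>n\<ge>N. \<exists>(m0::nat) (m1::nat) (m2::nat) (e :: 'x list \<Rightarrow> 'y list \<Rightarrow> nat \<times> nat \<times> nat)
        (dx :: nat \<Rightarrow> nat \<Rightarrow> 'y list \<Rightarrow> 'x list) (dy :: nat \<Rightarrow> nat \<Rightarrow> 'x list \<Rightarrow> 'y list).
          0 < m0 \<and> 0 < m1 \<and> 0 < m2 \<and>
          (\<forall>(xs, ys)\<in>blocks n. e xs ys \<in> {1..m0} \<times> {1..m1} \<times> {1..m2}) \<and>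
          max (err_x Q n e dx) (err_y Q n e dy) \<le> \<epsilon> \<and>
          log 2 (real m0) / real n \<le> R0 + \<epsilon> \<and>
          log 2 (real m1) / real n \<le> R1 + \<epsilon> \<and>
          log 2 (real m2) / real n \<le> R2 + \<epsilon>"
    using A unfolding achievable_def RR by simp
  have code: "\<exists>n\<ge>N. 1 \<le> n \<and> (\<exists>(m0::nat) (m1::nat) (m2::nat) (e :: 'x list \<Rightarrow> 'y list \<Rightarrow> nat \<times> nat \<times> nat)
        (dx :: nat \<Rightarrow> nat \<Rightarrow> 'y list \<Rightarrow> 'x list) (dy :: nat \<Rightarrow> nat \<Rightarrow> 'x list \<Rightarrow> 'y list).
          0 < m0 \<and> 0 < m1 \<and> 0 < m2 \<and>
          (\<forall>(xs, ys)\<in>blocks n. e xs ys \<in> {1..m0} \<times> {1..m1} \<times> {1..m2}) \<and>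
          max (err_x Q n e dx) (err_y Q n e dy) \<le> \<epsilon> \<and>
          log 2 (real m0) / real n \<le> R0 + \<epsilon> \<and>
          log 2 (real m1) / real n \<le> R1 + \<epsilon> \<and>
          log 2 (real m2) / real n \<le> R2 + \<epsilon>)" if \<epsilon>: "0 < \<epsilon>" for \<epsilon> N
  proof -
    obtain N0 where N0: "\<forall>n\<ge>N0. \<exists>(m0::nat) (m1::nat) (m2::nat) (e :: 'x list \<Rightarrow> 'y list \<Rightarrow> nat \<times> nat \<times> nat)
        (dx :: nat \<Rightarrow> nat \<Rightarrow> 'y list \<Rightarrow> 'x list) (dy :: nat \<Rightarrow> nat \<Rightarrow> 'x list \<Rightarrow> 'y list).
          0 < m0 \<and> 0 < m1 \<and> 0 < m2 \<and>
          (\<forall>(xs, ys)\<in>blocks n. e xs ys \<in> {1..m0} \<times> {1..m1} \<times> {1..m2}) \<and>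
          max (err_x Q n e dx) (err_y Q n e dy) \<le> \<epsilon> \<and>
          log 2 (real m0) / real n \<le> R0 + \<epsilon> \<and>
          log 2 (real m1) / real n \<le> R1 + \<epsilon> \<and>
          log 2 (real m2) / real n \<le> R2 + \<epsilon>" using A'[OF \<epsilon>] by blast
    show ?thesis
      apply (rule exI[of _ "max N N0 + 1"])
      apply (intro conjI)
        apply simp
       apply simp
      apply (rule N0[rule_format])
      apply simp
      done
  qed
  have nonneg: "0 \<le> Rk" if Rk: "Rk = R0 \<or> Rk = R1 \<or> Rk = R2" for Rk
  proof (rule ccontr)
    assume "\<not> 0 \<le> Rk"
    then have \<epsilon>: "0 < - Rk / 2" by simp
    obtain n m0 m1 m2 e dx dy where n: "1 \<le> n" and m: "0 < m0" "0 < m1" "0 < m2"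
      and r: "log 2 (real m0) / real n \<le> R0 + - Rk / 2" "log 2 (real m1) / real n \<le> R1 + - Rk / 2"
        "log 2 (real m2) / real n \<le> R2 + - Rk / 2"
      using code[OF \<epsilon>, of 0] by blast
    have z: "0 \<le> log 2 (real m) / real n" if "0 < m" for m using that n by simp
    have a: "0 \<le> log 2 (real m0) / real n" "0 \<le> log 2 (real m1) / real n" "0 \<le> log 2 (real m2) / real n"
      using z m by auto
    from Rk show False by (elim disjE) (use a r \<open>\<not> 0 \<le> Rk\<close> in linarith)+
  qed
  have Hx: "Hc (qQ Q) \<le> R0 + R1"
  proof (rule ccontr)
    assume neg: "\<not> ?thesis"
    define \<gamma> where "\<gamma> = Hc (qQ Q) - R0 - R1"
    have \<gamma>: "0 < \<gamma>" using neg by (simp add: \<gamma>_def)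
    define \<epsilon> where "\<epsilon> = min (\<gamma>/8) (1/4)"
    have \<epsilon>: "0 < \<epsilon>" using \<gamma> by (simp add: \<epsilon>_def)
    have e8: "\<epsilon> \<le> \<gamma> / 8" by (simp add: \<epsilon>_def)
    show False
    proof (rule conv_core[OF qQ_nonneg qQ_sum \<gamma>])
      fix N
      obtain n m0 m1 m2 e dx dy where n: "n \<ge> N" "1 \<le> n" and m: "0 < m0" "0 < m1"
        and rg: "\<forall>(xs, ys)\<in>blocks n. e xs ys \<in> {1..m0} \<times> {1..m1} \<times> {1..m2}"
        and er: "err_x Q n e dx \<le> \<epsilon>"
        and r: "log 2 (real m0) / real n \<le> R0 + \<epsilon>" "log 2 (real m1) / real n \<le> R1 + \<epsilon>"
        using code[OF \<epsilon>, of N] by (auto simp only: max.bounded_iff)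
      define ek where "ek xs ys = (fst (e xs ys), fst (snd (e xs ys)))" for xs ys
      define dk where "dk k ys = dx (fst k) (snd k) ys" for k ys
      have nn: "0 < real n" using n by simp
      have "real m0 * real m1 \<le> 2 powr (real n * (R0 + \<epsilon>)) * 2 powr (real n * (R1 + \<epsilon>))"
        using rate_inv[OF nn m(1) r(1)] rate_inv[OF nn m(2) r(2)] by (intro mult_mono) auto
      also have "\<dots> = 2 powr (real n * (R0 + R1 + 2 * \<epsilon>))" by (simp add: powr_add[symmetric] algebra_simps)
      also have "\<dots> \<le> 2 powr (real n * (Hc (qQ Q) - \<gamma>/2))"
      proof -
        have "R0 + R1 + 2 * \<epsilon> \<le> Hc (qQ Q) - \<gamma>/2" using e8 \<gamma> unfolding \<gamma>_def by (simp add: field_simps)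
        then show ?thesis using nn by (intro powr_mono mult_left_mono) auto
      qed
      finally have mm: "real m0 * real m1 \<le> 2 powr (real n * (Hc (qQ Q) - \<gamma>/2))" .
      have rg': "\<forall>(xs,ys)\<in>blocks n. ek xs ys \<in> {1..m0} \<times> {1..m1}" using rg by (auto simp: ek_def)
      have "(\<Sum>(xs,ys)\<in>blocks n. bp (qQ Q) xs ys * (if dk (ek xs ys) ys \<noteq> xs then 1 else 0)) = err_x Q n e dx"
        unfolding err_x_def
      proof (rule sum.cong[OF refl], clarify)
        fix xs ys assume "(xs, ys) \<in> (blocks n :: ('x list \<times> 'y list) set)"
        then have L: "length xs = length ys" by (auto simp: blocks_def)
        show "bp (qQ Q) xs ys * (if dk (ek xs ys) ys \<noteq> xs then 1 else 0) =
          (case e xs ys of (m0, m1, m2) \<Rightarrow> if dx m0 m1 ys \<noteq> xs then blockprob Q xs ys else 0)"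
          using blockprob_bp[OF L, of Q] by (simp add: case_prod_unfold ek_def dk_def)
      qed
      then have "(\<Sum>(xs,ys)\<in>blocks n. bp (qQ Q) xs ys * (if dk (ek xs ys) ys \<noteq> xs then 1 else 0)) \<le> 1/4"
        using er by (simp add: \<epsilon>_def)
      then show "\<exists>n\<ge>N. 1 \<le> n \<and> (\<exists>(m0::nat) (m1::nat) (ek::'x list \<Rightarrow> 'y list \<Rightarrow> nat \<times> nat) (dk::nat \<times> nat \<Rightarrow> 'y list \<Rightarrow> 'x list).
        (\<forall>(xs,ys)\<in>blocks n. ek xs ys \<in> {1..m0} \<times> {1..m1}) \<and>
        (\<Sum>(xs,ys)\<in>blocks n. bp (qQ Q) xs ys * (if dk (ek xs ys) ys \<noteq> xs then 1 else 0)) \<le> 1/4 \<and>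
        real m0 * real m1 \<le> 2 powr (real n * (Hc (qQ Q) - \<gamma>/2)))"
        using n rg' mm by blast
    qed
  qed
  have Hy: "Hc (qQs Q) \<le> R0 + R2"
  proof (rule ccontr)
    assume neg: "\<not> ?thesis"
    define \<gamma> where "\<gamma> = Hc (qQs Q) - R0 - R2"
    have \<gamma>: "0 < \<gamma>" using neg by (simp add: \<gamma>_def)
    define \<epsilon> where "\<epsilon> = min (\<gamma>/8) (1/4)"
    have \<epsilon>: "0 < \<epsilon>" using \<gamma> by (simp add: \<epsilon>_def)
    have e8: "\<epsilon> \<le> \<gamma> / 8" by (simp add: \<epsilon>_def)
    show False
    proof (rule conv_core[OF qQs_nonneg qQs_sum \<gamma>])
      fix N
      obtain n m0 m1 m2 e dx dy where n: "n \<ge> N" "1 \<le> n" and m: "0 < m0" "0 < m2"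
        and rg: "\<forall>(xs, ys)\<in>blocks n. e xs ys \<in> {1..m0} \<times> {1..m1} \<times> {1..m2}"
        and er: "err_y Q n e dy \<le> \<epsilon>"
        and r: "log 2 (real m0) / real n \<le> R0 + \<epsilon>" "log 2 (real m2) / real n \<le> R2 + \<epsilon>"
        using code[OF \<epsilon>, of N] by (auto simp only: max.bounded_iff)
      define ek where "ek ys xs = (fst (e xs ys), snd (snd (e xs ys)))" for xs ys
      define dk where "dk k xs = dy (fst k) (snd k) xs" for k xs
      have nn: "0 < real n" using n by simp
      have "real m0 * real m2 \<le> 2 powr (real n * (R0 + \<epsilon>)) * 2 powr (real n * (R2 + \<epsilon>))"
        using rate_inv[OF nn m(1) r(1)] rate_inv[OF nn m(2) r(2)] by (intro mult_mono) auto
      also have "\<dots> = 2 powr (real n * (R0 + R2 + 2 * \<epsilon>))" by (simp add: powr_add[symmetric] algebra_simps)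
      also have "\<dots> \<le> 2 powr (real n * (Hc (qQs Q) - \<gamma>/2))"
      proof -
        have "R0 + R2 + 2 * \<epsilon> \<le> Hc (qQs Q) - \<gamma>/2" using e8 \<gamma> unfolding \<gamma>_def by (simp add: field_simps)
        then show ?thesis using nn by (intro powr_mono mult_left_mono) auto
      qed
      finally have mm: "real m0 * real m2 \<le> 2 powr (real n * (Hc (qQs Q) - \<gamma>/2))" .
      have rg': "\<forall>(ys,xs)\<in>blocks n. ek ys xs \<in> {1..m0} \<times> {1..m2}"
      proof (clarify)
        fix ys xs assume "(ys, xs) \<in> (blocks n :: ('y list \<times> 'x list) set)"
        then have "(xs, ys) \<in> (blocks n :: ('x list \<times> 'y list) set)" by (auto simp: blocks_def)
        from bspec[OF rg this] have "e xs ys \<in> {1..m0} \<times> {1..m1} \<times> {1..m2}" by simp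
        then show "ek ys xs \<in> {1..m0} \<times> {1..m2}" by (auto simp: ek_def mem_Times_iff)
      qed
      have "(\<Sum>(ys,xs)\<in>blocks n. bp (qQs Q) ys xs * (if dk (ek ys xs) xs \<noteq> ys then 1 else 0))
          = (\<Sum>(xs,ys)\<in>blocks n. bp (qQs Q) ys xs * (if dk (ek ys xs) xs \<noteq> ys then 1 else 0))"
        by (rule sum_blocks_swap[symmetric])
      also have "\<dots> = err_y Q n e dy"
        unfolding err_y_def
      proof (rule sum.cong[OF refl], clarify)
        fix xs ys assume "(xs, ys) \<in> (blocks n :: ('x list \<times> 'y list) set)"
        then have L: "length xs = length ys" by (auto simp: blocks_def)
        show "bp (qQs Q) ys xs * (if dk (ek ys xs) xs \<noteq> ys then 1 else 0) =
          (case e xs ys of (m0, m1, m2) \<Rightarrow> if dy m0 m2 xs \<noteq> ys then blockprob Q xs ys else 0)"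
          using blockprob_bp[OF L, of Q] bp_swap[OF L, of Q] by (simp add: case_prod_unfold ek_def dk_def)
      qed
      finally have "(\<Sum>(ys,xs)\<in>blocks n. bp (qQs Q) ys xs * (if dk (ek ys xs) xs \<noteq> ys then 1 else 0)) \<le> 1/4"
        using er by (simp add: \<epsilon>_def)
      then show "\<exists>n\<ge>N. 1 \<le> n \<and> (\<exists>(m0::nat) (m1::nat) (ek::'y list \<Rightarrow> 'x list \<Rightarrow> nat \<times> nat) (dk::nat \<times> nat \<Rightarrow> 'x list \<Rightarrow> 'y list).
        (\<forall>(xs,ys)\<in>blocks n. ek xs ys \<in> {1..m0} \<times> {1..m1}) \<and>
        (\<Sum>(xs,ys)\<in>blocks n. bp (qQs Q) xs ys * (if dk (ek xs ys) ys \<noteq> xs then 1 else 0)) \<le> 1/4 \<and>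
        real m0 * real m1 \<le> 2 powr (real n * (Hc (qQs Q) - \<gamma>/2)))"
        using n rg' mm by blast
    qed
  qed
  show ?thesis unfolding RR Poly_def using nonneg Hx Hy by auto
qed


theorem theorem7:
  fixes Q :: "('x::finite \<times> 'y::finite) pmf"
  shows "achievable_region Q = closure (\<Union>p\<in>Pss Q. Rss p)"
proof -
  have "achievable_region Q = Poly Q"
    unfolding achievable_region_def using Poly_achievable[of _ Q] achievable_Poly[of Q] by blast
  also have "\<dots> = closure (Poly Q)" by (rule closure_closed[OF closed_Poly, symmetric])
  also have "\<dots> = closure (\<Union>p\<in>Pss Q. Rss p)" by (simp add: Union_eq_Poly)
  finally show ?thesis .
qed

end
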